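(* Let $H$ and $F_\varepsilon$, $\varepsilon>0$, be self-adjoint operators in a Hilbert space $\mathscr K$ such that $H\ge 1$, $F_\varepsilon\ge 0$, and each $F_\varepsilon$ is bounded. Let $m\in\mathbb N\cup\{\infty\}$, let $\mathscr D$ be a form core for $H$, and assume: (a) For every $\varepsilon>0$, $F_\varepsilon$ maps $\mathscr D$ into the form domain $\mathcal Q(H)$ and there is $c_\varepsilon\in(0,\infty)$ with $\langle F_\varepsilon\psi, H F_\varepsilon\psi\rangle\le c_\varepsilon\langle \psi, H\psi\rangle$ for all $\psi\in\mathscr D$ (the left side understood as the quadratic form of $H$). (b) There is $c\in[1,\infty)$ such that for all $\varepsilon>0$ and $\psi\in\mathscr D$: $\langle\psi,F_\varepsilon^2\psi\rangle\le c^2\langle\psi,H\psi\rangle$. (c) For every $n\in\mathbb N$ with $n<m$ there is $c_n\in[1,\infty)$ such that for all $\varepsilon>0$ and all $\varphi_1,\varphi_2\in\mathscr D$: $$\big|\langle H\varphi_1,F_\varepsilon^n\varphi_2\rangle-\langle F_\varepsilon^n\varphi_1,H\varphi_2\rangle\big|\le c_n\big\{\langle\varphi_1,H\varphi_1\rangle+\langle F_\varepsilon^{n-1}\varphi_2,HF_\varepsilon^{n-1}\varphi_2\rangle\big\}$$ (all expressions understood as quadratic/sesquilinear forms of $H$). Then for every $n\in\mathbb N$ with $n<m+1$ and every $\varepsilon>0$, $$\|F_\varepsilon^n H^{-n/2}\|\le C_n:=4^{n-1}c^n\prod_{\ell=1}^{n-1}c_\ell,$$ where an empty product equals $1$.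
   Context: $\mathcal Q(H)=\mathcal D(H^{1/2})$ denotes the form domain of $H$; a form core is a subspace dense in $\mathcal Q(H)$ with respect to the form norm. *)

theory Defs
  imports "HOL-Analysis.Analysis" "HOL-Library.Extended_Nat"
begin

text \<open>A complex Hilbert space, presented as a real Hilbert space together with
  an orthogonal complex structure cJ (multiplication by the imaginary unit).\<close>

class complex_hilbert = real_inner + complete_space +
  fixes cJ :: "'a \<Rightarrow> 'a"
  assumes cJ_add: "cJ (x + y) = cJ x + cJ y"
    and cJ_scaleR: "cJ (r *\<^sub>R x) = r *\<^sub>R cJ x"
    and cJ_cJ: "cJ (cJ x) = - x"
    and cJ_inner: "inner (cJ x) (cJ y) = inner x y"

text \<open>Complex scalar multiplication and the complex inner product
  (antilinear in the first, linear in the second argument).\<close>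

definition hscaleC :: "complex \<Rightarrow> 'a::complex_hilbert \<Rightarrow> 'a" where
  "hscaleC c x = Re c *\<^sub>R x + Im c *\<^sub>R cJ x"

definition hinner :: "'a::complex_hilbert \<Rightarrow> 'a \<Rightarrow> complex" where
  "hinner x y = Complex (inner x y) (inner (cJ x) y)"

definition hsubspace :: "'a::complex_hilbert set \<Rightarrow> bool" where
  "hsubspace S \<longleftrightarrow> 0 \<in> S \<and> (\<forall>x\<in>S. \<forall>y\<in>S. x + y \<in> S) \<and> (\<forall>c. \<forall>x\<in>S. hscaleC c x \<in> S)"

definition hlinear_on :: "'a::complex_hilbert set \<Rightarrow> ('a \<Rightarrow> 'a) \<Rightarrow> bool" where
  "hlinear_on D T \<longleftrightarrow> hsubspace D \<and> (\<forall>x\<in>D. \<forall>y\<in>D. T (x + y) = T x + T y)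
     \<and> (\<forall>c. \<forall>x\<in>D. T (hscaleC c x) = hscaleC c (T x))"

text \<open>Self-adjoint: densely defined, and the adjoint (domain and action) equals T.\<close>

definition self_adjoint_op :: "'a::complex_hilbert set \<Rightarrow> ('a \<Rightarrow> 'a) \<Rightarrow> bool" where
  "self_adjoint_op D T \<longleftrightarrow> hlinear_on D T \<and> closure D = UNIV \<and>
     (\<forall>y z. (\<forall>x\<in>D. hinner (T x) y = hinner x z) \<longleftrightarrow> (y \<in> D \<and> T y = z))"

definition op_ge :: "'a::complex_hilbert set \<Rightarrow> ('a \<Rightarrow> 'a) \<Rightarrow> real \<Rightarrow> bool" where
  "op_ge D T a \<longleftrightarrow> (\<forall>x\<in>D. a * (norm x)\<^sup>2 \<le> Re (hinner x (T x)))"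

definition bounded_self_adjoint :: "('a::complex_hilbert \<Rightarrow> 'a) \<Rightarrow> bool" where
  "bounded_self_adjoint T \<longleftrightarrow> bounded_linear T \<and> self_adjoint_op UNIV T"

definition op_inv :: "'a::complex_hilbert set \<Rightarrow> ('a \<Rightarrow> 'a) \<Rightarrow> 'a \<Rightarrow> 'a" where
  "op_inv D H y = (THE x. x \<in> D \<and> H x = y)"

definition pos_sqrt :: "('a::complex_hilbert \<Rightarrow> 'a) \<Rightarrow> 'a \<Rightarrow> 'a" where
  "pos_sqrt A = (THE B. bounded_self_adjoint B \<and> op_ge UNIV B 0 \<and> (\<forall>x. B (B x) = A x))"

text \<open>H^{-1/2}, H^{-n/2} = (H^{-1/2})^n, the form domain Q(H) = D(H^{1/2}) = ran H^{-1/2},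
  H^{1/2} on Q(H), and the sesquilinear form of H.\<close>

definition Hmhalf :: "'a::complex_hilbert set \<Rightarrow> ('a \<Rightarrow> 'a) \<Rightarrow> 'a \<Rightarrow> 'a" where
  "Hmhalf D H = pos_sqrt (op_inv D H)"

definition Hmpow :: "'a::complex_hilbert set \<Rightarrow> ('a \<Rightarrow> 'a) \<Rightarrow> nat \<Rightarrow> 'a \<Rightarrow> 'a" where
  "Hmpow D H n = (Hmhalf D H) ^^ n"

definition form_dom :: "'a::complex_hilbert set \<Rightarrow> ('a \<Rightarrow> 'a) \<Rightarrow> 'a set" where
  "form_dom D H = range (Hmhalf D H)"

definition Hhalf :: "'a::complex_hilbert set \<Rightarrow> ('a \<Rightarrow> 'a) \<Rightarrow> 'a \<Rightarrow> 'a" where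
  "Hhalf D H \<psi> = (THE x. Hmhalf D H x = \<psi>)"

definition hform :: "'a::complex_hilbert set \<Rightarrow> ('a \<Rightarrow> 'a) \<Rightarrow> 'a \<Rightarrow> 'a \<Rightarrow> complex" where
  "hform D H \<phi> \<psi> = hinner (Hhalf D H \<phi>) (Hhalf D H \<psi>)"

definition form_norm :: "'a::complex_hilbert set \<Rightarrow> ('a \<Rightarrow> 'a) \<Rightarrow> 'a \<Rightarrow> real" where
  "form_norm D H \<psi> = sqrt ((norm \<psi>)\<^sup>2 + Re (hform D H \<psi> \<psi>))"

definition form_core :: "'a::complex_hilbert set \<Rightarrow> ('a \<Rightarrow> 'a) \<Rightarrow> 'a set \<Rightarrow> bool" where
  "form_core D H S \<longleftrightarrow> hsubspace S \<and> S \<subseteq> form_dom D H \<and>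
     (\<forall>\<phi>\<in>form_dom D H. \<forall>e>0. \<exists>\<psi>\<in>S. form_norm D H (\<phi> - \<psi>) < e)"

end

theory Submission
  imports Defs "HOL-Computational_Algebra.Formal_Power_Series"
begin


section \<open>Basics of the complex structure\<close>

lemma cJ_zero[simp]: "cJ 0 = 0"
  using cJ_scaleR[of 0 0] by simp

lemma cJ_minus: "cJ (- x) = - cJ x"
  using cJ_scaleR[of "-1" x] by simp

lemma cJ_diff: "cJ (x - y) = cJ x - cJ y"
  using cJ_add[of x "-y"] cJ_minus[of y] by simp

lemma norm_cJ[simp]: "norm (cJ x) = norm x"
  using cJ_inner[of x x] by (simp add: norm_eq_sqrt_inner)

lemma bounded_linear_cJ: "bounded_linear cJ"
  by (rule bounded_linear_intro[where K=1]) (auto simp: cJ_add cJ_scaleR)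

lemma inner_cJ_left: "inner (cJ x) y = - inner x (cJ y)"
proof -
  have "inner (cJ x) y = inner (cJ (cJ x)) (cJ y)" by (simp add: cJ_inner)
  also have "\<dots> = - inner x (cJ y)" by (simp add: cJ_cJ)
  finally show ?thesis .
qed

lemma inner_cJ_self[simp]: "inner x (cJ x) = 0"
  using inner_cJ_left[of x x] by (simp add: inner_commute)

lemma inner_cJ_self'[simp]: "inner (cJ x) x = 0"
  using inner_cJ_self[of x] by (simp add: inner_commute)

lemma Re_hinner[simp]: "Re (hinner x y) = inner x y"
  by (simp add: hinner_def)

lemma Im_hinner[simp]: "Im (hinner x y) = inner (cJ x) y"
  by (simp add: hinner_def)

lemma hinner_self: "hinner x x = complex_of_real ((norm x)\<^sup>2)"
  by (simp add: complex_eq_iff power2_norm_eq_inner)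

lemma cmod_hinner_le: "cmod (hinner x y) \<le> norm x * norm y"
proof -
  define p where "p = inner x y"
  define q where "q = inner (cJ x) y"
  define w where "w = p *\<^sub>R x + q *\<^sub>R cJ x"
  have nw: "(norm w)\<^sup>2 = (p\<^sup>2 + q\<^sup>2) * (norm x)\<^sup>2"
    unfolding w_def power2_norm_eq_inner
    by (simp add: inner_add_left inner_add_right algebra_simps power2_eq_square cJ_inner
        inner_commute[of "cJ x" x])
  have iw: "inner w y = p\<^sup>2 + q\<^sup>2"
    unfolding w_def by (simp add: inner_add_left p_def q_def power2_eq_square)
  have "p\<^sup>2 + q\<^sup>2 \<le> norm w * norm y"
    using norm_cauchy_schwarz[of w y] iw by simp
  also have "norm w = sqrt (p\<^sup>2 + q\<^sup>2) * norm x"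
    using nw by (metis norm_ge_zero real_sqrt_abs real_sqrt_mult real_sqrt_pow2_iff abs_of_nonneg
        real_sqrt_unique power_mult_distrib real_sqrt_ge_zero zero_le_mult_iff)
  finally have *: "sqrt (p\<^sup>2 + q\<^sup>2) * sqrt (p\<^sup>2 + q\<^sup>2) \<le> sqrt (p\<^sup>2 + q\<^sup>2) * (norm x * norm y)"
    by (simp add: mult.assoc)
  have "cmod (hinner x y) = sqrt (p\<^sup>2 + q\<^sup>2)"
    by (simp add: cmod_def p_def q_def)
  moreover have "sqrt (p\<^sup>2 + q\<^sup>2) \<le> norm x * norm y"
  proof (cases "sqrt (p\<^sup>2 + q\<^sup>2) = 0")
    case True then show ?thesis by simp
  next
    case False
    have "p\<^sup>2 + q\<^sup>2 \<ge> 0" by simp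
    then have "sqrt (p\<^sup>2 + q\<^sup>2) > 0" using False real_sqrt_ge_zero[of "p\<^sup>2 + q\<^sup>2"] by linarith
    with * show ?thesis by (metis mult_le_cancel_left_pos)
  qed
  ultimately show ?thesis by simp
qed

lemma hinner_add_left: "hinner (x + y) z = hinner x z + hinner y z"
  by (simp add: complex_eq_iff inner_add_left cJ_add)
lemma hinner_add_right: "hinner z (x + y) = hinner z x + hinner z y"
  by (simp add: complex_eq_iff inner_add_right)
lemma hinner_diff_left: "hinner (x - y) z = hinner x z - hinner y z"
  by (simp add: complex_eq_iff inner_diff_left cJ_diff)
lemma hinner_diff_right: "hinner z (x - y) = hinner z x - hinner z y"
  by (simp add: complex_eq_iff inner_diff_right)
lemma hinner_scaleR_left: "hinner (r *\<^sub>R x) z = complex_of_real r * hinner x z"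
  by (simp add: complex_eq_iff cJ_scaleR)
lemma hinner_scaleR_right: "hinner z (r *\<^sub>R x) = complex_of_real r * hinner z x"
  by (simp add: complex_eq_iff)
lemma hinner_zero_left[simp]: "hinner 0 x = 0"
  by (simp add: complex_eq_iff)
lemma hinner_zero_right[simp]: "hinner x 0 = 0"
  by (simp add: complex_eq_iff)

lemma continuous_on_hinner[continuous_intros]:
  "continuous_on S f \<Longrightarrow> continuous_on S g \<Longrightarrow> continuous_on S (\<lambda>x. hinner (f x) (g x))"
  unfolding hinner_def Complex_eq
  by (intro continuous_intros bounded_linear.continuous_on[OF bounded_linear_cJ]) auto

lemma hscaleC_of_real: "hscaleC (complex_of_real r) x = r *\<^sub>R x"
  by (simp add: hscaleC_def)
lemma hscaleC_i: "hscaleC \<i> x = cJ x"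
  by (simp add: hscaleC_def)
lemma hscaleC_m1: "hscaleC (-1) x = - x"
  by (simp add: hscaleC_def)

definition rsa :: "('a::complex_hilbert \<Rightarrow> 'a) \<Rightarrow> bool" where
  "rsa T \<longleftrightarrow> bounded_linear T \<and> (\<forall>x. T (cJ x) = cJ (T x)) \<and> (\<forall>x y. inner (T x) y = inner x (T y))"

lemma inner_eq_all_imp: "(\<And>x. inner x z = inner x w) \<Longrightarrow> z = w"
  by (metis inner_diff_left inner_diff_right inner_eq_zero_iff right_minus_eq)

lemma bsa_iff_rsa: "bounded_self_adjoint T \<longleftrightarrow> rsa T"
proof
  assume a: "bounded_self_adjoint T"
  then have bl: "bounded_linear T" and sa: "self_adjoint_op UNIV T"
    by (auto simp: bounded_self_adjoint_def)
  from sa have "\<forall>c x. T (hscaleC c x) = hscaleC c (T x)"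
    by (auto simp: self_adjoint_op_def hlinear_on_def)
  then have cj: "\<forall>x. T (cJ x) = cJ (T x)" by (metis hscaleC_i)
  from sa have "\<And>y. \<forall>x. hinner (T x) y = hinner x (T y)"
    by (auto simp: self_adjoint_op_def)
  then have "\<forall>x y. inner (T x) y = inner x (T y)"
    by (metis Re_hinner)
  with bl cj show "rsa T" by (simp add: rsa_def)
next
  assume r: "rsa T"
  then have bl: "bounded_linear T" and cj: "\<And>x. T (cJ x) = cJ (T x)"
    and sy: "\<And>x y. inner (T x) y = inner x (T y)" by (auto simp: rsa_def)
  interpret bounded_linear T by fact
  have hl: "hlinear_on UNIV T"
    by (auto simp: hlinear_on_def hsubspace_def add hscaleC_def scaleR cj)
  have hs: "hinner (T x) y = hinner x (T y)" for x y
    by (simp add: complex_eq_iff sy flip: cj)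
  have iff: "(\<forall>x\<in>UNIV. hinner (T x) y = hinner x z) \<longleftrightarrow> (y \<in> UNIV \<and> T y = z)" for y z
  proof
    assume h: "\<forall>x\<in>UNIV. hinner (T x) y = hinner x z"
    have "inner x z = inner x (T y)" for x
      using h[rule_format, of x] hs[of x y] by (metis Re_hinner UNIV_I)
    then show "y \<in> UNIV \<and> T y = z" using inner_eq_all_imp[of z "T y"] by simp
  qed (auto simp: hs)
  show "bounded_self_adjoint T"
    unfolding bounded_self_adjoint_def self_adjoint_op_def
    using bl hl iff by auto
qed

lemma op_ge0_iff: "op_ge UNIV T 0 \<longleftrightarrow> (\<forall>x. 0 \<le> inner x (T x))"
  by (simp add: op_ge_def)




subclass (in complex_hilbert) banach ..

section \<open>Coefficients of sqrt(1-t)\<close>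

definition sa :: "nat \<Rightarrow> real" where "sa k = (-1)^k * ((1/2) gchoose k)"

lemma sa_0[simp]: "sa 0 = 1" by (simp add: sa_def)

lemma sa_Suc: "sa (Suc k) = sa k * ((real k - 1/2) / (real k + 1))"
proof -
  have "real (Suc k) * ((1/2::real) gchoose Suc k) = (1/2 - real k) * ((1/2) gchoose k)"
    using gbinomial_mult_1[of "1/2::real" k] by (simp add: algebra_simps)
  then have g: "((1/2::real) gchoose Suc k) = (1/2 - real k) / (real k + 1) * ((1/2) gchoose k)"
    by (simp add: field_simps)
  have d: "(1/2 - real k)/(real k+1) = - ((real k - 1/2)/(real k + 1))"
    by (simp add: field_simps)
  show ?thesis unfolding sa_def g d by simp
qed

lemma sa_nonpos: "k \<ge> 1 \<Longrightarrow> sa k \<le> 0"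
proof (induction k)
  case 0 then show ?case by simp
next
  case (Suc k)
  show ?case
  proof (cases "k = 0")
    case True then show ?thesis by (simp add: sa_Suc)
  next
    case False
    then have "sa k \<le> 0" using Suc by simp
    moreover have "(real k - 1/2) / (real k + 1) \<ge> 0" using False by simp
    ultimately show ?thesis unfolding sa_Suc by (rule mult_nonpos_nonneg)
  qed
qed

lemma sa_partial: "(\<Sum>k\<le>N. sa k) = sa N * (1 - 2 * real N)"
proof (induction N)
  case 0 then show ?case by simp
next
  case (Suc N)
  have e: "sa (Suc N) * (real N + 1) = sa N * (real N - 1/2)"
    unfolding sa_Suc by (simp add: field_simps)
  show ?case using Suc.IH e by (auto simp: algebra_simps)
qed

lemma sa_partial_nonneg: "(\<Sum>k\<le>N. sa k) \<ge> 0"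
proof (cases "N = 0")
  case False
  then have "sa N \<le> 0" by (simp add: sa_nonpos)
  moreover have "1 - 2 * real N \<le> 0" using False by simp
  ultimately show ?thesis by (simp add: sa_partial mult_nonpos_nonpos)
qed simp

lemma abs_sa: "\<bar>sa k\<bar> = (if k = 0 then 1 else - sa k)"
  using sa_nonpos[of k] by auto

lemma abs_sa_partial: "(\<Sum>k\<le>N. \<bar>sa k\<bar>) \<le> 2"
proof -
  have "(\<Sum>k\<le>N. \<bar>sa k\<bar>) = (\<Sum>k\<le>N. (if k = 0 then 2 else 0) - sa k)"
    by (rule sum.cong) (auto simp: abs_sa)
  also have "\<dots> = 2 - (\<Sum>k\<le>N. sa k)"
    by (simp add: sum_subtractf sum.delta)
  finally show ?thesis using sa_partial_nonneg[of N] by linarith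
qed

lemma summable_abs_sa: "summable (\<lambda>k. \<bar>sa k\<bar>)"
  by (rule bounded_imp_summable[where B=2]) (auto intro: abs_sa_partial)

lemma summable_sa: "summable sa"
  using summable_abs_sa summable_rabs_cancel by blast

lemma suminf_sa_nonneg: "suminf sa \<ge> 0"
proof -
  have "(\<lambda>n. \<Sum>k<n. sa k) \<longlonglongrightarrow> suminf sa"
    using summable_sa summable_LIMSEQ by blast
  moreover have "\<forall>n. (\<Sum>k<n. sa k) \<ge> 0"
  proof
    fix n show "(\<Sum>k<n. sa k) \<ge> 0"
      by (cases n) (simp_all add: lessThan_Suc_atMost sa_partial_nonneg)
  qed
  ultimately show ?thesis by (meson LIMSEQ_le_const)
qed

lemma sa_conv: "(\<Sum>i\<le>k. sa i * sa (k - i)) = (if k = 0 then 1 else if k = 1 then -1 else 0)"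
proof -
  have "(\<Sum>i\<le>k. sa i * sa (k - i)) = (\<Sum>i=0..k. (-1)^k * (((1/2::real) gchoose i) * ((1/2) gchoose (k - i))))"
    unfolding atMost_atLeast0
  proof (rule sum.cong)
    fix i assume "i \<in> {0..k}"
    then have "(-1::real)^i * (-1)^(k-i) = (-1)^k"
      by (metis le_add_diff_inverse power_add atLeastAtMost_iff)
    then show "sa i * sa (k - i) = (-1)^k * (((1/2::real) gchoose i) * ((1/2) gchoose (k - i)))"
      unfolding sa_def by (metis (no_types, lifting) mult.assoc mult.left_commute)
  qed simp
  also have "\<dots> = (-1)^k * ((1::real) gchoose k)"
    by (simp add: sum_distrib_left[symmetric] gbinomial_Vandermonde)
  also have "\<dots> = (-1)^k * real (1 choose k)"
    using binomial_gbinomial[of 1 k, where 'a=real] by simp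
  also have "\<dots> = (if k = 0 then 1 else if k = 1 then -1 else 0)"
    by (cases k) (auto simp: binomial_eq_0)
  finally show ?thesis .
qed

lemma cauchy_diag_gen:
  fixes g :: "nat \<Rightarrow> nat \<Rightarrow> 'b::real_normed_vector" and a :: "nat \<Rightarrow> real"
  assumes a: "summable (\<lambda>k. \<bar>a k\<bar>)"
    and bd: "\<And>i j. norm (g i j) \<le> \<bar>a i\<bar> * \<bar>a j\<bar>"
  shows "(\<lambda>n. (\<Sum>(i,j)\<in>{..<n}\<times>{..<n}. g i j) - (\<Sum>(i,j)\<in>{(i,j). i+j<n}. g i j)) \<longlonglongrightarrow> 0"
proof -
  let ?S1 = "\<lambda>n::nat. {..<n} \<times> {..<n}"
  let ?S2 = "\<lambda>n::nat. {(i,j). i + j < n}"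
  have S1_mono: "\<And>m n. m \<le> n \<Longrightarrow> ?S1 m \<subseteq> ?S1 n" by auto
  have S2_le_S1: "\<And>n. ?S2 n \<subseteq> ?S1 n" by auto
  have S1_le_S2: "\<And>n. ?S1 (n div 2) \<subseteq> ?S2 n" by auto
  have finite_S1: "\<And>n. finite (?S1 n)" by simp
  with S2_le_S1 have finite_S2: "\<And>n. finite (?S2 n)" by (rule finite_subset)
  let ?g = "\<lambda>(i,j). g i j"
  let ?f = "\<lambda>(i,j). \<bar>a i\<bar> * \<bar>a j\<bar>"
  have f_nonneg: "\<And>x. 0 \<le> ?f x" by auto
  then have norm_sum_f: "\<And>A. norm (sum ?f A) = sum ?f A"
    unfolding real_norm_def
    by (simp only: abs_of_nonneg sum_nonneg [rule_format])
  have "(\<lambda>n. (\<Sum>k<n. \<bar>a k\<bar>) * (\<Sum>k<n. \<bar>a k\<bar>)) \<longlonglongrightarrow> (\<Sum>k. \<bar>a k\<bar>) * (\<Sum>k. \<bar>a k\<bar>)"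
    using a by (intro tendsto_mult summable_LIMSEQ)
  then have "(\<lambda>n. sum ?f (?S1 n)) \<longlonglongrightarrow> (\<Sum>k. \<bar>a k\<bar>) * (\<Sum>k. \<bar>a k\<bar>)"
    by (simp only: sum_product sum.Sigma [rule_format] finite_lessThan)
  then have "convergent (\<lambda>n. sum ?f (?S1 n))"
    by (rule convergentI)
  then have Cauchy: "Cauchy (\<lambda>n. sum ?f (?S1 n))"
    by (rule convergent_Cauchy)
  have "Zfun (\<lambda>n. sum ?f (?S1 n - ?S2 n)) sequentially"
  proof (rule ZfunI, simp only: eventually_sequentially norm_sum_f)
    fix r :: real
    assume r: "0 < r"
    from CauchyD [OF Cauchy r] obtain N
      where "\<forall>m\<ge>N. \<forall>n\<ge>N. norm (sum ?f (?S1 m) - sum ?f (?S1 n)) < r" ..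
    then have "\<And>m n. N \<le> n \<Longrightarrow> n \<le> m \<Longrightarrow> norm (sum ?f (?S1 m - ?S1 n)) < r"
      by (simp only: sum_diff finite_S1 S1_mono)
    then have N: "\<And>m n. N \<le> n \<Longrightarrow> n \<le> m \<Longrightarrow> sum ?f (?S1 m - ?S1 n) < r"
      by (simp only: norm_sum_f)
    show "\<exists>N. \<forall>n\<ge>N. sum ?f (?S1 n - ?S2 n) < r"
    proof (intro exI allI impI)
      fix n
      assume "2 * N \<le> n"
      then have n: "N \<le> n div 2" by simp
      have "sum ?f (?S1 n - ?S2 n) \<le> sum ?f (?S1 n - ?S1 (n div 2))"
        by (intro sum_mono2 finite_Diff finite_S1 f_nonneg Diff_mono subset_refl S1_le_S2)
      also have "\<dots> < r"
        using n div_le_dividend by (rule N)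
      finally show "sum ?f (?S1 n - ?S2 n) < r" .
    qed
  qed
  then have "Zfun (\<lambda>n. sum ?g (?S1 n - ?S2 n)) sequentially"
    apply (rule Zfun_le [rule_format])
    apply (simp only: norm_sum_f)
    apply (rule order_trans [OF norm_sum sum_mono])
    apply (auto simp add: bd)
    done
  then show ?thesis
    unfolding tendsto_Zfun_iff diff_0_right
    by (simp only: sum_diff finite_S1 S2_le_S1)
qed

lemma pos_form_zero:
  assumes bl: "bounded_linear P" and sy: "\<And>x y. inner (P x) y = inner x (P y)"
    and pos: "\<And>x. 0 \<le> inner x (P x)" and z: "inner y (P y) = 0"
  shows "P y = 0"
proof (rule ccontr)
  interpret bounded_linear P by fact
  assume ne: "P y \<noteq> 0"
  define w where "w = P y"
  define K where "K = inner w (P w)"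
  define N where "N = inner w w"
  have K0: "K \<ge> 0" using pos by (simp add: K_def)
  have N0: "N > 0" using ne by (simp add: N_def w_def)
  define s where "s = N / (K + 1)"
  have s0: "s > 0" using K0 N0 by (simp add: s_def)
  have "0 \<le> inner (y - s *\<^sub>R w) (P (y - s *\<^sub>R w))" by (rule pos)
  also have "\<dots> = inner y (P y) - s * inner w (P y) - s * inner y (P w) + s * s * K"
    by (simp add: diff scaleR inner_diff_left inner_diff_right K_def algebra_simps)
  also have "inner y (P w) = inner (P y) w" by (simp add: sy)
  finally have "0 \<le> - 2 * s * N + s * s * K"
    using z by (simp add: w_def N_def inner_commute)
  then have "2 * s * N \<le> s * (s * K)" by (simp add: algebra_simps)
  then have "2 * N \<le> s * K" using s0 by (simp add: mult.assoc)
  also have "s * K = N * (K / (K + 1))" by (simp add: s_def)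
  also have "\<dots> \<le> N * 1"
    using K0 N0 by (intro mult_left_mono) auto
  finally show False using N0 by simp
qed




section \<open>Square root of a positive contraction-like operator\<close>

lemma bl_sum: "bounded_linear f \<Longrightarrow> f (sum g S) = (\<Sum>x\<in>S. f (g x))"
  by (simp add: linear_sum bounded_linear.linear)

lemma rsa_funpow: "rsa T \<Longrightarrow> rsa (T ^^ k)"
proof (induction k)
  case 0 then show ?case by (simp add: rsa_def bounded_linear_ident)
next
  case (Suc k)
  have bl: "bounded_linear (T ^^ Suc k)"
    using Suc bounded_linear_compose[of T "T^^k"] by (auto simp: rsa_def o_def)
  have cj: "(T ^^ Suc k) (cJ x) = cJ ((T ^^ Suc k) x)" for x
    using Suc by (simp add: rsa_def)
  have sy: "inner ((T ^^ Suc k) x) y = inner x ((T ^^ Suc k) y)" for x y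
  proof -
    have "inner ((T ^^ Suc k) x) y = inner (T ((T ^^ k) x)) y" by simp
    also have "\<dots> = inner ((T ^^ k) x) (T y)" using Suc by (simp add: rsa_def)
    also have "\<dots> = inner x ((T ^^ k) (T y))" using Suc by (simp add: rsa_def)
    also have "\<dots> = inner x ((T ^^ Suc k) y)" by (simp add: funpow_Suc_right del: funpow.simps)
    finally show ?thesis .
  qed
  show ?case using bl cj sy by (simp add: rsa_def del: funpow.simps)
qed

locale sqrt_ctx =
  fixes A :: "'a::complex_hilbert \<Rightarrow> 'a"
  assumes rA: "rsa A" and posA: "\<And>y. (norm (A y))\<^sup>2 \<le> inner y (A y)"
begin

definition T where "T x = x - A x"
definition B where "B x = (\<Sum>k. sa k *\<^sub>R (T ^^ k) x)"

lemma blA: "bounded_linear A" using rA by (simp add: rsa_def)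

lemma rT: "rsa T"
proof -
  interpret bounded_linear A by (rule blA)
  show ?thesis using rA unfolding rsa_def T_def
    by (auto intro!: bounded_linear_sub bounded_linear_ident simp: diff cJ_diff inner_diff_left inner_diff_right)
qed

lemma norm_T: "norm (T x) \<le> norm x"
proof -
  have a0: "inner x (A x) \<ge> 0" using posA[of x] by (meson order_trans zero_le_power2)
  have "(norm (T x))\<^sup>2 = (norm x)\<^sup>2 - 2 * inner x (A x) + (norm (A x))\<^sup>2"
    unfolding T_def power2_norm_eq_inner
    by (simp add: inner_diff_left inner_diff_right inner_commute[of "A x" x])
  also have "\<dots> \<le> (norm x)\<^sup>2" using posA[of x] a0 by simp
  finally show ?thesis using power2_le_imp_le by fastforce
qed

lemma norm_Tk: "norm ((T ^^ k) x) \<le> norm x"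
  by (induction k) (auto intro: order_trans[OF norm_T])

lemma rTk: "rsa (T ^^ k)" by (rule rsa_funpow[OF rT])

lemma blTk: "bounded_linear (T ^^ k)" using rTk by (simp add: rsa_def)

lemma summ: "summable (\<lambda>k. sa k *\<^sub>R (T ^^ k) x)"
proof (rule summable_norm_cancel, rule summable_comparison_test)
  show "\<exists>N. \<forall>n\<ge>N. norm (norm (sa n *\<^sub>R (T ^^ n) x)) \<le> \<bar>sa n\<bar> * norm x"
    using norm_Tk by (intro exI[of _ 0] allI impI) (simp add: mult_left_mono)
  show "summable (\<lambda>n. \<bar>sa n\<bar> * norm x)"
    by (rule summable_mult2[OF summable_abs_sa])
qed

definition K where "K = (\<Sum>k. \<bar>sa k\<bar>)"

lemma norm_B: "norm (B x) \<le> K * norm x"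
proof -
  have "norm (B x) \<le> (\<Sum>k. \<bar>sa k\<bar> * norm x)"
    unfolding B_def
    by (rule norm_suminf_le) (auto intro: mult_left_mono norm_Tk summable_mult2[OF summable_abs_sa])
  also have "\<dots> = K * norm x"
    by (simp add: K_def suminf_mult2[OF summable_abs_sa])
  finally show ?thesis .
qed

lemma blB: "bounded_linear B"
proof (rule bounded_linear_intro[where K=K])
  fix x y
  show "B (x + y) = B x + B y"
    unfolding B_def
    by (simp add: suminf_add[OF summ summ] linear_add[OF bounded_linear.linear[OF blTk]] scaleR_add_right)
  fix r
  show "B (r *\<^sub>R x) = r *\<^sub>R B x"
    unfolding B_def
    by (simp add: suminf_scaleR_right[OF summ] linear_scale[OF bounded_linear.linear[OF blTk]] mult.commute)
  show "norm (B x) \<le> norm x * K" using norm_B[of x] by (simp add: mult.commute)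
qed

lemma rB: "rsa B"
proof -
  have cj: "B (cJ x) = cJ (B x)" for x
  proof -
    have "cJ (B x) = (\<Sum>k. cJ (sa k *\<^sub>R (T ^^ k) x))"
      unfolding B_def by (rule bounded_linear.suminf[OF bounded_linear_cJ summ])
    also have "\<dots> = B (cJ x)"
      unfolding B_def using rTk by (simp add: rsa_def cJ_scaleR)
    finally show ?thesis by simp
  qed
  have sy: "inner (B x) y = inner x (B y)" for x y
  proof -
    have "inner (B x) y = (\<Sum>k. inner (sa k *\<^sub>R (T ^^ k) x) y)"
      unfolding B_def by (rule bounded_linear.suminf[OF bounded_linear_inner_left summ])
    also have "\<dots> = (\<Sum>k. inner x (sa k *\<^sub>R (T ^^ k) y))"
      using rTk by (simp add: rsa_def)
    also have "\<dots> = inner x (B y)"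
      unfolding B_def by (rule bounded_linear.suminf[OF bounded_linear_inner_right summ, symmetric])
    finally show ?thesis .
  qed
  show ?thesis using blB cj sy by (simp add: rsa_def)
qed

lemma posB: "0 \<le> inner x (B x)"
proof -
  have s1: "summable (\<lambda>k. inner x (sa k *\<^sub>R (T ^^ k) x))"
    by (rule bounded_linear.summable[OF bounded_linear_inner_right summ])
  have "inner x (B x) = (\<Sum>k. inner x (sa k *\<^sub>R (T ^^ k) x))"
    unfolding B_def by (rule bounded_linear.suminf[OF bounded_linear_inner_right summ])
  moreover have "(\<Sum>k. sa k * (norm x)\<^sup>2) \<le> (\<Sum>k. inner x (sa k *\<^sub>R (T ^^ k) x))"
  proof (rule suminf_le)
    fix k
    show "sa k * (norm x)\<^sup>2 \<le> inner x (sa k *\<^sub>R (T ^^ k) x)"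
    proof (cases "k = 0")
      case True then show ?thesis by (simp add: power2_norm_eq_inner)
    next
      case False
      then have s: "sa k \<le> 0" by (simp add: sa_nonpos)
      have "inner x ((T ^^ k) x) \<le> norm x * norm ((T ^^ k) x)" by (rule norm_cauchy_schwarz)
      also have "\<dots> \<le> (norm x)\<^sup>2" using norm_Tk[of k x]
        by (simp add: power2_eq_square mult_left_mono)
      finally show ?thesis using s by (simp add: mult_left_mono_neg)
    qed
  qed (use s1 in \<open>auto intro: summable_mult2 summable_sa\<close>)
  moreover have "(\<Sum>k. sa k * (norm x)\<^sup>2) = suminf sa * (norm x)\<^sup>2"
    by (simp add: suminf_mult2[OF summable_sa])
  moreover have "suminf sa * (norm x)\<^sup>2 \<ge> 0" using suminf_sa_nonneg by simp
  ultimately show ?thesis by linarith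
qed

definition P where "P N x = (\<Sum>k<N. sa k *\<^sub>R (T ^^ k) x)"

lemma P_lim: "(\<lambda>N. P N x) \<longlonglongrightarrow> B x"
  unfolding P_def B_def using summ summable_LIMSEQ by blast

lemma blP: "bounded_linear (P N)"
  unfolding P_def
  by (intro bounded_linear_sum bounded_linear_scaleR_right[THEN bounded_linear_compose[unfolded o_def]] blTk)

lemma norm_P: "norm (P N x) \<le> 2 * norm x"
proof -
  have "norm (P N x) \<le> (\<Sum>k<N. norm (sa k *\<^sub>R (T ^^ k) x))"
    unfolding P_def by (rule norm_sum)
  also have "\<dots> \<le> (\<Sum>k<N. \<bar>sa k\<bar> * norm x)"
    by (intro sum_mono) (auto intro: mult_left_mono norm_Tk)
  also have "\<dots> = (\<Sum>k<N. \<bar>sa k\<bar>) * norm x" by (simp add: sum_distrib_right)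
  also have "(\<Sum>k<N. \<bar>sa k\<bar>) \<le> 2"
    by (cases N) (simp_all add: lessThan_Suc_atMost abs_sa_partial)
  then have "(\<Sum>k<N. \<bar>sa k\<bar>) * norm x \<le> 2 * norm x" by (simp add: mult_right_mono)
  finally show ?thesis .
qed

lemma PP_lim: "(\<lambda>N. P N (P N x)) \<longlonglongrightarrow> B (B x)"
proof -
  have eq: "P N (P N x) = P N (B x) - P N (B x - P N x)" for N
    using blP[of N] by (simp add: linear_diff bounded_linear.linear)
  have 1: "(\<lambda>N. P N (B x)) \<longlonglongrightarrow> B (B x)" by (rule P_lim)
  have 2: "(\<lambda>N. P N (B x - P N x)) \<longlonglongrightarrow> 0"
  proof (rule Lim_null_comparison)
    show "\<forall>\<^sub>F N in sequentially. norm (P N (B x - P N x)) \<le> 2 * norm (B x - P N x)"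
      by (simp add: norm_P)
    have "(\<lambda>N. B x - P N x) \<longlonglongrightarrow> 0"
      using tendsto_diff[OF tendsto_const P_lim, of "B x" x] by simp
    then have "(\<lambda>N. norm (B x - P N x)) \<longlonglongrightarrow> 0" by (simp add: tendsto_norm_zero)
    then show "(\<lambda>N. 2 * norm (B x - P N x)) \<longlonglongrightarrow> 0"
      using tendsto_mult_right_zero by blast
  qed
  show ?thesis unfolding eq using tendsto_diff[OF 1 2] by simp
qed

lemma PP_S1: "P N (P N x) = (\<Sum>(i,j)\<in>{..<N}\<times>{..<N}. (sa i * sa j) *\<^sub>R (T ^^ (i + j)) x)"
proof -
  have "P N (P N x) = (\<Sum>i<N. sa i *\<^sub>R (T ^^ i) (\<Sum>j<N. sa j *\<^sub>R (T ^^ j) x))"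
    by (simp add: P_def)
  also have "\<dots> = (\<Sum>i<N. \<Sum>j<N. (sa i * sa j) *\<^sub>R (T ^^ (i + j)) x)"
    by (intro sum.cong refl)
       (simp add: bl_sum[OF blTk] scaleR_sum_right linear_scale[OF bounded_linear.linear[OF blTk]] funpow_add)
  also have "\<dots> = (\<Sum>(i,j)\<in>{..<N}\<times>{..<N}. (sa i * sa j) *\<^sub>R (T ^^ (i + j)) x)"
    by (rule sum.cartesian_product)
  finally show ?thesis .
qed

lemma S2_eq: "N \<ge> 2 \<Longrightarrow> (\<Sum>(i,j)\<in>{(i,j). i+j<N}. (sa i * sa j) *\<^sub>R (T ^^ (i + j)) x) = A x"
proof -
  assume N: "N \<ge> 2"
  have "(\<Sum>(i,j)\<in>{(i,j). i+j<N}. (sa i * sa j) *\<^sub>R (T ^^ (i + j)) x)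
      = (\<Sum>k<N. \<Sum>i\<le>k. (sa i * sa (k - i)) *\<^sub>R (T ^^ (i + (k - i))) x)"
    by (rule sum.triangle_reindex)
  also have "\<dots> = (\<Sum>k<N. (\<Sum>i\<le>k. sa i * sa (k - i)) *\<^sub>R (T ^^ k) x)"
    by (intro sum.cong refl) (simp add: scaleR_sum_left)
  also have "\<dots> = (\<Sum>k<N. (if k = 0 then 1 else if k = 1 then -1 else 0) *\<^sub>R (T ^^ k) x)"
    by (simp add: sa_conv)
  also have "\<dots> = (\<Sum>k\<in>{0,1}. (if k = 0 then 1 else if k = 1 then -1 else 0) *\<^sub>R (T ^^ k) x)"
    using N by (intro sum.mono_neutral_right) auto
  also have "\<dots> = A x" by (simp add: T_def)
  finally show ?thesis .
qed

lemma BB: "B (B x) = A x"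
proof -
  define g where "g i j = (sa i * sa j) *\<^sub>R (T ^^ (i + j)) x" for i j
  define a where "a i = sa i * sqrt (norm x)" for i
  have sa': "summable (\<lambda>k. \<bar>a k\<bar>)"
    unfolding a_def by (simp add: abs_mult summable_mult2[OF summable_abs_sa])
  have bd: "norm (g i j) \<le> \<bar>a i\<bar> * \<bar>a j\<bar>" for i j
  proof -
    have "norm (g i j) = \<bar>sa i\<bar> * \<bar>sa j\<bar> * norm ((T ^^ (i + j)) x)"
      by (simp add: g_def abs_mult)
    also have "\<dots> \<le> \<bar>sa i\<bar> * \<bar>sa j\<bar> * norm x"
      by (intro mult_left_mono norm_Tk) auto
    also have "\<dots> = \<bar>a i\<bar> * \<bar>a j\<bar>" by (simp add: a_def abs_mult)
    finally show ?thesis .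
  qed
  have d: "(\<lambda>n. (\<Sum>(i,j)\<in>{..<n}\<times>{..<n}. g i j) - (\<Sum>(i,j)\<in>{(i,j). i+j<n}. g i j)) \<longlonglongrightarrow> 0"
    by (rule cauchy_diag_gen[OF sa' bd])
  have s1: "(\<lambda>n. (\<Sum>(i,j)\<in>{..<n}\<times>{..<n}. g i j)) \<longlonglongrightarrow> B (B x)"
    using PP_lim[of x] by (simp add: PP_S1 g_def)
  have "(\<lambda>n. (\<Sum>(i,j)\<in>{(i,j). i+j<n}. g i j)) \<longlonglongrightarrow> B (B x) - 0"
    using tendsto_diff[OF s1 d] by simp
  moreover have "(\<lambda>n. (\<Sum>(i,j)\<in>{(i,j). i+j<n}. g i j)) \<longlonglongrightarrow> A x"
  proof (rule tendsto_eventually)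
    show "\<forall>\<^sub>F n in sequentially. (\<Sum>(i,j)\<in>{(i,j). i+j<n}. g i j) = A x"
      using S2_eq unfolding g_def eventually_sequentially by blast
  qed
  ultimately show ?thesis using LIMSEQ_unique by fastforce
qed

lemma B_unique:
  assumes rC: "rsa C" and posC: "\<And>x. 0 \<le> inner x (C x)" and CC: "\<And>x. C (C x) = A x"
  shows "C = B"
proof
  fix x
  interpret Cl: bounded_linear C using rC by (simp add: rsa_def)
  interpret Bl: bounded_linear B by (rule blB)
  have CA: "C (A y) = A (C y)" for y by (metis CC)
  have CT: "C (T y) = T (C y)" for y by (simp add: T_def Cl.diff CA)
  have CTk: "C ((T ^^ k) y) = (T ^^ k) (C y)" for k y
    by (induction k) (simp_all add: CT)
  have CB: "C (B y) = B (C y)" for y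
  proof -
    have "C (B y) = (\<Sum>k. C (sa k *\<^sub>R (T ^^ k) y))"
      unfolding B_def by (rule Cl.suminf[OF summ])
    also have "\<dots> = B (C y)" by (simp add: B_def Cl.scaleR CTk)
    finally show ?thesis .
  qed
  define y where "y = B x - C x"
  have "inner y (B y) + inner y (C y) = inner y (B y + C y)" by (simp add: inner_add_right)
  also have "B y + C y = B (B x) - B (C x) + C (B x) - C (C x)"
    by (simp add: y_def Bl.diff Cl.diff)
  also have "\<dots> = 0" by (simp add: BB CC CB)
  finally have sum0: "inner y (B y) + inner y (C y) = 0" by simp
  have b0: "inner y (B y) = 0" and c0: "inner y (C y) = 0"
    using sum0 posB[of y] posC[of y] by linarith+
  have By: "B y = 0"
    by (rule pos_form_zero[OF blB _ posB b0]) (use rB in \<open>simp add: rsa_def\<close>)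
  have Cy: "C y = 0"
    by (rule pos_form_zero[OF Cl.bounded_linear_axioms _ posC c0]) (use rC in \<open>simp add: rsa_def\<close>)
  have "inner y y = inner (B x) y - inner (C x) y" by (simp add: y_def inner_diff_left)
  also have "\<dots> = inner x (B y) - inner x (C y)"
    using rB rC by (simp add: rsa_def)
  also have "\<dots> = 0" by (simp add: By Cy)
  finally have "y = 0" by simp
  then show "C x = B x" by (simp add: y_def)
qed

lemma ex1_sqrt: "\<exists>!R. bounded_self_adjoint R \<and> op_ge UNIV R 0 \<and> (\<forall>x. R (R x) = A x)"
proof (rule ex1I[where a=B])
  show "bounded_self_adjoint B \<and> op_ge UNIV B 0 \<and> (\<forall>x. B (B x) = A x)"
    using rB posB BB by (simp add: bsa_iff_rsa op_ge0_iff)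
next
  fix C assume "bounded_self_adjoint C \<and> op_ge UNIV C 0 \<and> (\<forall>x. C (C x) = A x)"
  then show "C = B" using B_unique by (auto simp: bsa_iff_rsa op_ge0_iff)
qed

lemma pos_sqrt_props:
  "rsa (pos_sqrt A) \<and> (\<forall>x. 0 \<le> inner x (pos_sqrt A x)) \<and> (\<forall>x. pos_sqrt A (pos_sqrt A x) = A x)"
proof -
  have "bounded_self_adjoint (pos_sqrt A) \<and> op_ge UNIV (pos_sqrt A) 0 \<and> (\<forall>x. pos_sqrt A (pos_sqrt A x) = A x)"
    unfolding pos_sqrt_def by (rule theI'[OF ex1_sqrt])
  then show ?thesis by (simp add: bsa_iff_rsa op_ge0_iff)
qed

end




section \<open>Projection onto a closed subspace\<close>

lemma proj_exists:
  fixes V :: "'a::{real_inner,complete_space} set"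
  assumes sub: "subspace V" and cl: "closed V"
  shows "\<exists>p\<in>V. \<forall>v\<in>V. inner (y - p) v = 0"
proof -
  have V0: "0 \<in> V" using sub by (simp add: subspace_0)
  define d where "d = (INF v\<in>V. dist y v)"
  have bdd: "bdd_below ((\<lambda>v. dist y v) ` V)" by (rule bdd_belowI[where m=0]) auto
  have d_le: "d \<le> dist y v" if "v \<in> V" for v
    unfolding d_def using bdd that by (simp add: cINF_lower)
  have d0: "d \<ge> 0" using d_le[OF V0] cINF_greatest[of V 0 "\<lambda>v. dist y v"] V0
    unfolding d_def by auto
  have "\<exists>v. v \<in> V \<and> dist y v < d + 1 / real (Suc n)" for n
  proof -
    have "d < d + 1 / real (Suc n)" by simp
    then have "\<exists>x\<in>V. dist y x < d + 1 / real (Suc n)"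
      using cINF_less_iff[OF _ bdd, of "d + 1 / real (Suc n)"] V0 unfolding d_def by blast
    then show ?thesis by blast
  qed
  then obtain v where vV: "\<And>n. v n \<in> V" and vd: "\<And>n. dist y (v n) < d + 1 / real (Suc n)"
    by metis
  have key: "(norm (v n - v m))\<^sup>2 \<le> 2 * (dist y (v n))\<^sup>2 + 2 * (dist y (v m))\<^sup>2 - 4 * d\<^sup>2" for n m
  proof -
    have mid: "(1/2) *\<^sub>R (v n + v m) \<in> V"
      using sub vV by (simp add: subspace_add subspace_mul)
    have "d \<le> norm (y - (1/2) *\<^sub>R (v n + v m))"
      using d_le[OF mid] by (simp add: dist_norm)
    then have m: "d\<^sup>2 \<le> (norm (y - (1/2) *\<^sub>R (v n + v m)))\<^sup>2"
      using d0 by (simp add: power_mono)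
    have par: "(norm (v n - v m))\<^sup>2 = 2 * (norm (y - v n))\<^sup>2 + 2 * (norm (y - v m))\<^sup>2
               - 4 * (norm (y - (1/2) *\<^sub>R (v n + v m)))\<^sup>2"
      unfolding power2_norm_eq_inner
      by (simp add: inner_diff_left inner_diff_right inner_add_left inner_add_right
          inner_commute algebra_simps)
    show ?thesis using par m by (simp add: dist_norm)
  qed
  have sq: "(dist y (v n))\<^sup>2 \<le> d\<^sup>2 + (2 * d + 1) * (1 / real (Suc n))" for n
  proof -
    define t where "t = 1 / real (Suc n)"
    have t0: "0 < t" "t \<le> 1" by (auto simp: t_def)
    have "(dist y (v n))\<^sup>2 \<le> (d + t)\<^sup>2"
      using vd[of n] by (intro power_mono) (auto simp: t_def)
    also have "\<dots> = d\<^sup>2 + (2 * d + t) * t" by (simp add: power2_eq_square algebra_simps)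
    also have "\<dots> \<le> d\<^sup>2 + (2 * d + 1) * t" using t0 d0 by (simp add: mult_right_mono)
    finally show ?thesis by (simp add: t_def)
  qed
  have cauchy: "Cauchy v"
  proof (rule metric_CauchyI)
    fix e :: real assume e: "e > 0"
    obtain N where N: "4 * (2 * d + 1) / e\<^sup>2 < real N"
      using reals_Archimedean2 by blast
    have "\<forall>m\<ge>N. \<forall>n\<ge>N. dist (v m) (v n) < e"
    proof (intro allI impI)
      fix m n assume mN: "m \<ge> N" and nN: "n \<ge> N"
      define t where "t = 1 / real (Suc N)"
      have tm: "1 / real (Suc m) \<le> t" and tn: "1 / real (Suc n) \<le> t"
        using mN nN by (auto simp: t_def frac_le)
      have "(dist (v m) (v n))\<^sup>2 \<le> 2 * (dist y (v m))\<^sup>2 + 2 * (dist y (v n))\<^sup>2 - 4 * d\<^sup>2"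
        using key[of m n] by (simp add: dist_norm)
      also have "\<dots> \<le> 2 * (d\<^sup>2 + (2 * d + 1) * t) + 2 * (d\<^sup>2 + (2 * d + 1) * t) - 4 * d\<^sup>2"
        using sq[of m] sq[of n] tm tn d0
        by (smt (verit, best) mult_left_mono)
      also have "\<dots> = 4 * (2 * d + 1) * t" by (simp add: algebra_simps)
      also have "\<dots> < e\<^sup>2"
      proof -
        have "4 * (2 * d + 1) < e\<^sup>2 * real (Suc N)"
          using N e by (simp add: field_simps) (smt (verit) e mult_left_mono of_nat_0_le_iff power2_eq_square zero_le_power2 mult_pos_pos)
        then show ?thesis by (simp add: t_def field_simps)
      qed
      finally show "dist (v m) (v n) < e"
        using e by (smt (verit) power_mono zero_le_dist)
    qed
    then show "\<exists>M. \<forall>m\<ge>M. \<forall>n\<ge>M. dist (v m) (v n) < e" by blast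
  qed
  then obtain p where lim: "v \<longlonglongrightarrow> p" using Cauchy_convergent_iff convergent_def by blast
  have pV: "p \<in> V" by (rule closed_sequentially[OF cl vV lim])
  have dp: "dist y p \<le> d"
  proof (rule tendsto_le[OF trivial_limit_sequentially])
    show "(\<lambda>n. dist y (v n)) \<longlonglongrightarrow> dist y p" by (intro tendsto_intros lim)
    show "(\<lambda>n. d + 1 / real (Suc n)) \<longlonglongrightarrow> d"
      using tendsto_add[OF tendsto_const[of d] LIMSEQ_inverse_real_of_nat] by (simp add: inverse_eq_divide)
    show "\<forall>\<^sub>F n in sequentially. dist y (v n) \<le> d + 1 / real (Suc n)"
      using vd by (simp add: less_imp_le)
  qed
  have minp: "norm (y - p) \<le> norm (y - w)" if "w \<in> V" for w
    using dp d_le[OF that] by (simp add: dist_norm)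
  have "inner (y - p) w = 0" if wV: "w \<in> V" for w
  proof (rule ccontr)
    define a where "a = inner (y - p) w"
    define b where "b = inner w w"
    assume "inner (y - p) w \<noteq> 0"
    then have a0: "a \<noteq> 0" by (simp add: a_def)
    have b0: "b \<ge> 0" by (simp add: b_def)
    define t where "t = a / (b + 1)"
    have "p + t *\<^sub>R w \<in> V" using sub pV wV by (simp add: subspace_add subspace_mul)
    then have "(norm (y - p))\<^sup>2 \<le> (norm (y - (p + t *\<^sub>R w)))\<^sup>2"
      using minp by (simp add: power_mono)
    also have "(norm (y - (p + t *\<^sub>R w)))\<^sup>2 = (norm (y - p))\<^sup>2 - 2 * t * a + t * t * b"
      unfolding power2_norm_eq_inner a_def b_def
      by (simp add: inner_diff_left inner_diff_right inner_add_left inner_add_right inner_commute algebra_simps)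
    finally have "2 * t * a \<le> t * t * b" by simp
    then have i: "2 * t * a * (b + 1)\<^sup>2 \<le> t * t * b * (b + 1)\<^sup>2"
      by (rule mult_right_mono) simp
    have b1: "b + 1 \<noteq> 0" using b0 by simp
    have e1: "2 * t * a * (b + 1)\<^sup>2 = 2 * a * a * (b + 1)"
      using b1 by (simp add: t_def power2_eq_square field_simps)
    have tb: "t * (b + 1) = a" using b1 by (simp add: t_def)
    have "t * t * b * (b + 1)\<^sup>2 = (t * (b + 1)) * (t * (b + 1)) * b"
      by (simp add: power2_eq_square algebra_simps)
    then have e2: "t * t * b * (b + 1)\<^sup>2 = a * a * b" using tb by simp
    have "2 * a * a * (b + 1) \<le> a * a * b" using i e1 e2 by simp
    then have "a * a * (2 * (b + 1)) \<le> a * a * b" by (simp add: algebra_simps)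
    moreover have "a * a > 0" using a0 by (metis not_real_square_gt_zero)
    ultimately have "2 * (b + 1) \<le> b" using mult_le_cancel_left_pos by blast
    then show False using b0 by simp
  qed
  with pV show ?thesis by blast
qed




lemma tendsto_hinner[tendsto_intros]:
  "(f \<longlongrightarrow> a) F \<Longrightarrow> (g \<longlongrightarrow> b) F \<Longrightarrow> ((\<lambda>x. hinner (f x) (g x)) \<longlongrightarrow> hinner a b) F"
  unfolding hinner_def Complex_eq
  by (intro tendsto_intros bounded_linear.tendsto[OF bounded_linear_cJ])

locale Hctx =
  fixes DH :: "'a::complex_hilbert set" and H :: "'a \<Rightarrow> 'a"
  assumes H_sa: "self_adjoint_op DH H" and H_ge1: "op_ge DH H 1"
begin

lemma hsub: "hsubspace DH" and Hadd: "x \<in> DH \<Longrightarrow> y \<in> DH \<Longrightarrow> H (x + y) = H x + H y"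
  and HscC: "x \<in> DH \<Longrightarrow> H (hscaleC c x) = hscaleC c (H x)"
proof -
  have "hlinear_on DH H" using H_sa by (simp add: self_adjoint_op_def)
  then show "hsubspace DH" "x \<in> DH \<Longrightarrow> y \<in> DH \<Longrightarrow> H (x + y) = H x + H y"
    "x \<in> DH \<Longrightarrow> H (hscaleC c x) = hscaleC c (H x)"
    by (simp_all add: hlinear_on_def)
qed

lemma D0: "0 \<in> DH" and Dadd: "x \<in> DH \<Longrightarrow> y \<in> DH \<Longrightarrow> x + y \<in> DH"
  and DscC: "x \<in> DH \<Longrightarrow> hscaleC c x \<in> DH"
  using hsub by (auto simp: hsubspace_def)

lemma DscR: "x \<in> DH \<Longrightarrow> r *\<^sub>R x \<in> DH" using DscC[of x "complex_of_real r"] by (simp add: hscaleC_of_real)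
lemma DcJ: "x \<in> DH \<Longrightarrow> cJ x \<in> DH" using DscC[of x \<i>] by (simp add: hscaleC_i)
lemma Dminus: "x \<in> DH \<Longrightarrow> - x \<in> DH" using DscC[of x "-1"] by (simp add: hscaleC_m1)
lemma Ddiff: "x \<in> DH \<Longrightarrow> y \<in> DH \<Longrightarrow> x - y \<in> DH"
  using Dadd[OF _ Dminus, of x y] by simp
lemma HscR: "x \<in> DH \<Longrightarrow> H (r *\<^sub>R x) = r *\<^sub>R H x" using HscC[of x "complex_of_real r"] by (simp add: hscaleC_of_real)
lemma HcJ: "x \<in> DH \<Longrightarrow> H (cJ x) = cJ (H x)" using HscC[of x \<i>] by (simp add: hscaleC_i)
lemma H0: "H 0 = 0" using HscR[OF D0, of 0] by simp
lemma Hdiff: "x \<in> DH \<Longrightarrow> y \<in> DH \<Longrightarrow> H (x - y) = H x - H y"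
proof -
  assume x: "x \<in> DH" and y: "y \<in> DH"
  have "H x = H ((x - y) + y)" by simp
  also have "\<dots> = H (x - y) + H y" using Hadd[OF Ddiff[OF x y] y] .
  finally show ?thesis by simp
qed

lemma sa_iff: "(\<forall>x\<in>DH. hinner (H x) y = hinner x z) \<longleftrightarrow> (y \<in> DH \<and> H y = z)"
  using H_sa by (simp add: self_adjoint_op_def)

lemma Hsym: "y \<in> DH \<Longrightarrow> x \<in> DH \<Longrightarrow> hinner (H x) y = hinner x (H y)"
proof -
  assume y: "y \<in> DH" and x: "x \<in> DH"
  have "\<forall>x\<in>DH. hinner (H x) y = hinner x (H y)" using sa_iff[of y "H y"] y by simp
  then show ?thesis using x by blast
qed

lemma low: "x \<in> DH \<Longrightarrow> (norm x)\<^sup>2 \<le> inner x (H x)"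
  using H_ge1 by (auto simp: op_ge_def)

lemma low2: "x \<in> DH \<Longrightarrow> norm x \<le> norm (H x)"
proof -
  assume x: "x \<in> DH"
  have "(norm x)\<^sup>2 \<le> norm x * norm (H x)"
    using low[OF x] norm_cauchy_schwarz[of x "H x"] by linarith
  show ?thesis
  proof (cases "norm x = 0")
    case False
    then have "norm x > 0" by simp
    moreover have "norm x * norm x \<le> norm x * norm (H x)"
      using \<open>(norm x)\<^sup>2 \<le> norm x * norm (H x)\<close> by (simp add: power2_eq_square)
    ultimately show ?thesis using mult_le_cancel_left_pos by blast
  qed simp
qed

lemma Hinj: "x \<in> DH \<Longrightarrow> y \<in> DH \<Longrightarrow> H x = H y \<Longrightarrow> x = y"
proof -
  assume x: "x \<in> DH" and y: "y \<in> DH" and e: "H x = H y"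
  have "norm (x - y) \<le> norm (H (x - y))" by (rule low2[OF Ddiff[OF x y]])
  also have "H (x - y) = 0" using Hdiff[OF x y] e by simp
  finally show "x = y" by simp
qed

lemma range_closed: "closed (H ` DH)"
  unfolding closed_sequential_limits
proof (intro allI impI)
  fix z l assume a: "(\<forall>n. z n \<in> H ` DH) \<and> z \<longlonglongrightarrow> l"
  then have "\<forall>n. \<exists>x. x \<in> DH \<and> z n = H x" by blast
  from choice[OF this] obtain x where "\<forall>n. x n \<in> DH \<and> z n = H (x n)" by blast
  then have xD: "\<And>n. x n \<in> DH" and zx: "\<And>n. z n = H (x n)" by auto
  have "Cauchy z" using a by (blast intro: LIMSEQ_imp_Cauchy)
  have "Cauchy x"
  proof (rule metric_CauchyI)
    fix e :: real assume "e > 0"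
    then obtain M where M: "\<forall>m\<ge>M. \<forall>n\<ge>M. dist (z m) (z n) < e"
      using \<open>Cauchy z\<close> metric_CauchyD by blast
    have "dist (x m) (x n) \<le> dist (z m) (z n)" for m n
      using low2[OF Ddiff[OF xD xD], of m n] Hdiff[OF xD xD, of m n] by (simp add: dist_norm zx)
    then show "\<exists>M. \<forall>m\<ge>M. \<forall>n\<ge>M. dist (x m) (x n) < e" using M by (meson le_less_trans)
  qed
  then obtain x0 where x0: "x \<longlonglongrightarrow> x0" using Cauchy_convergent_iff convergent_def by blast
  have "\<forall>w\<in>DH. hinner (H w) x0 = hinner w l"
  proof
    fix w assume w: "w \<in> DH"
    have 1: "(\<lambda>n. hinner (H w) (x n)) \<longlonglongrightarrow> hinner (H w) x0" by (intro tendsto_intros x0)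
    have 2: "(\<lambda>n. hinner (H w) (x n)) \<longlonglongrightarrow> hinner w l"
      using Hsym[OF xD w] a by (simp add: zx[symmetric]) (intro tendsto_intros, blast)
    show "hinner (H w) x0 = hinner w l" using LIMSEQ_unique[OF 1 2] .
  qed
  then have "x0 \<in> DH \<and> H x0 = l" using sa_iff[of x0 l] by simp
  then show "l \<in> H ` DH" by blast
qed

lemma Hsurj: "\<exists>x\<in>DH. H x = y"
proof -
  have sub: "subspace (H ` DH)"
    unfolding subspace_def
  proof (intro conjI ballI allI)
    show "0 \<in> H ` DH" using D0 H0 by (metis image_eqI)
    fix a b assume "a \<in> H ` DH" "b \<in> H ` DH"
    then obtain a' b' where "a' \<in> DH" "b' \<in> DH" "a = H a'" "b = H b'" by blast
    then show "a + b \<in> H ` DH" using Hadd Dadd by (metis image_eqI)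
  next
    fix c a assume "a \<in> H ` DH"
    then obtain a' where "a' \<in> DH" "a = H a'" by blast
    then show "c *\<^sub>R a \<in> H ` DH" using HscR DscR by (metis image_eqI)
  qed
  obtain p where pV: "p \<in> H ` DH" and orth: "\<forall>v\<in>H ` DH. inner (y - p) v = 0"
    using proj_exists[OF sub range_closed] by blast
  have "\<forall>w\<in>DH. hinner (H w) (y - p) = hinner w 0"
  proof
    fix w assume w: "w \<in> DH"
    have "inner (H w) (y - p) = 0" using orth w by (simp add: inner_commute)
    moreover have "inner (cJ (H w)) (y - p) = 0"
    proof -
      have "cJ (H w) \<in> H ` DH" using DcJ[OF w] HcJ[OF w] by (metis image_eqI)
      then show ?thesis using orth by (metis inner_commute)
    qed
    ultimately show "hinner (H w) (y - p) = hinner w 0" by (simp add: complex_eq_iff)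
  qed
  then have "y - p \<in> DH \<and> H (y - p) = 0" using sa_iff[of "y - p" 0] by simp
  then have "y - p = 0" using low2[of "y - p"] by simp
  then show ?thesis using pV by auto
qed

definition A where "A = op_inv DH H"

lemma A_ex1: "\<exists>!x. x \<in> DH \<and> H x = y"
  using Hsurj Hinj by blast

lemma A_D: "A y \<in> DH" and HA: "H (A y) = y"
  using theI'[OF A_ex1[of y]] by (simp_all add: A_def op_inv_def)

lemma A_eq: "x \<in> DH \<Longrightarrow> H x = y \<Longrightarrow> A y = x"
  using A_ex1[of y] A_D HA by blast

lemma AH: "x \<in> DH \<Longrightarrow> A (H x) = x" using A_eq by blast

lemma rA: "rsa A"
proof -
  have add: "A (x + y) = A x + A y" for x y
    by (rule A_eq) (simp_all add: Dadd A_D Hadd HA)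
  have sc: "A (r *\<^sub>R x) = r *\<^sub>R A x" for r x
    by (rule A_eq) (simp_all add: DscR A_D HscR HA)
  have nrm: "norm (A x) \<le> norm x * 1" for x
    using low2[OF A_D] HA by simp
  have cj: "A (cJ x) = cJ (A x)" for x
    by (rule A_eq) (simp_all add: DcJ A_D HcJ HA)
  have sy: "inner (A x) y = inner x (A y)" for x y
  proof -
    have "inner (A x) y = Re (hinner (A x) (H (A y)))" by (simp add: HA)
    also have "\<dots> = Re (hinner (H (A x)) (A y))" by (simp add: Hsym A_D)
    also have "\<dots> = inner x (A y)" by (simp add: HA)
    finally show ?thesis .
  qed
  have "bounded_linear A" by (rule bounded_linear_intro[OF add sc nrm])
  then show ?thesis using cj sy by (simp add: rsa_def)
qed

lemma posA: "(norm (A y))\<^sup>2 \<le> inner y (A y)"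
  using low[OF A_D[of y]] HA[of y] by (simp add: inner_commute)

sublocale sq: sqrt_ctx A by (unfold_locales) (rule rA, rule posA)

definition R where "R = Hmhalf DH H"

lemma R_eq: "R = pos_sqrt A" by (simp add: R_def Hmhalf_def A_def)

lemma rR: "rsa R" and posR: "0 \<le> inner x (R x)" and RR: "R (R x) = A x"
  using sq.pos_sqrt_props by (simp_all add: R_eq)

lemma blR: "bounded_linear R" using rR by (simp add: rsa_def)

lemma R_inj: "R x = R y \<Longrightarrow> x = y"
proof -
  interpret bounded_linear R by (rule blR)
  assume "R x = R y"
  then have "R (x - y) = 0" by (simp add: diff)
  then have "A (x - y) = 0" using RR[of "x - y"] by (simp add: zero)
  then have "x - y = H 0" using HA[of "x - y"] by simp
  then show "x = y" using H0 by simp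
qed

lemma norm_R: "norm (R x) \<le> norm x"
proof -
  have sy: "inner (R a) b = inner a (R b)" for a b using rR by (simp add: rsa_def)
  have "(norm (R x))\<^sup>2 = inner (R x) (R x)" by (simp add: power2_norm_eq_inner)
  also have "\<dots> = inner x (R (R x))" by (rule sy)
  also have "\<dots> = inner x (A x)" by (simp add: RR)
  finally have "(norm (R x))\<^sup>2 = inner x (A x)" .
  also have "\<dots> \<le> norm x * norm (A x)" by (rule norm_cauchy_schwarz)
  also have "\<dots> \<le> norm x * norm x"
  proof -
    have "norm (A x) \<le> norm (H (A x))" by (rule low2[OF A_D])
    then have "norm (A x) \<le> norm x" by (simp only: HA)
    then show ?thesis by (simp add: mult_left_mono)
  qed
  finally have "(norm (R x))\<^sup>2 \<le> (norm x)\<^sup>2" by (simp only: power2_eq_square)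
  then show ?thesis using power2_le_imp_le norm_ge_zero by blast
qed

lemma Hhalf_R: "Hhalf DH H (R u) = u"
  unfolding Hhalf_def R_def[symmetric]
  using R_inj by (intro the_equality) auto

lemma hform_R: "hform DH H (R u) (R v) = hinner u v"
  by (simp add: hform_def Hhalf_R)

lemma form_dom_R: "form_dom DH H = range R"
  by (simp add: form_dom_def R_def)

lemma Hmpow_R: "Hmpow DH H n = R ^^ n"
  by (simp add: Hmpow_def R_def)

lemma hinner_R: "hinner (R x) y = hinner x (R y)"
proof -
  have "cJ (R x) = R (cJ x)" using rR by (simp add: rsa_def)
  moreover have "inner (R a) b = inner a (R b)" for a b using rR by (simp add: rsa_def)
  ultimately show ?thesis by (simp add: complex_eq_iff)
qed
  
end




lemma dense_le:
  fixes f g :: "'b::topological_space \<Rightarrow> 'c::linorder_topology"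
  assumes "closure S = UNIV" "continuous_on UNIV f" "continuous_on UNIV g" "\<And>s. s \<in> S \<Longrightarrow> f s \<le> g s"
  shows "f x \<le> g x"
proof -
  have "closed {x. f x \<le> g x}" by (rule closed_Collect_le[OF assms(2,3)])
  moreover have "S \<subseteq> {x. f x \<le> g x}" using assms(4) by auto
  ultimately have "closure S \<subseteq> {x. f x \<le> g x}" by (rule closure_minimal[rotated])
  then show ?thesis using assms(1) by auto
qed

lemma dense_eq:
  fixes f g :: "'b::topological_space \<Rightarrow> 'c::t2_space"
  assumes "closure S = UNIV" "continuous_on UNIV f" "continuous_on UNIV g" "\<And>s. s \<in> S \<Longrightarrow> f s = g s"
  shows "f x = g x"
proof -
  have "closed {x. f x = g x}" by (rule closed_Collect_eq[OF assms(2,3)])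
  moreover have "S \<subseteq> {x. f x = g x}" using assms(4) by auto
  ultimately have "closure S \<subseteq> {x. f x = g x}" by (rule closure_minimal[rotated])
  then show ?thesis using assms(1) by auto
qed

lemma rsa_hinner: "rsa T \<Longrightarrow> hinner (T x) y = hinner x (T y)"
proof -
  assume r: "rsa T"
  have "cJ (T x) = T (cJ x)" using r by (simp add: rsa_def)
  moreover have "inner (T a) b = inner a (T b)" for a b using r by (simp add: rsa_def)
  ultimately show ?thesis by (simp add: complex_eq_iff)
qed

locale Mctx = Hctx DH H
  for DH :: "'a::complex_hilbert set" and H :: "'a \<Rightarrow> 'a" +
  fixes F :: "'a \<Rightarrow> 'a" and Dc :: "'a set" and ce c :: real
    and m :: enat and cs :: "nat \<Rightarrow> real"
  assumes rF: "rsa F"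
    and core: "form_core DH H Dc"
    and a1: "F ` Dc \<subseteq> form_dom DH H"
    and ce: "ce > 0"
    and a2: "\<And>\<psi>. \<psi> \<in> Dc \<Longrightarrow> Re (hform DH H (F \<psi>) (F \<psi>)) \<le> ce * Re (hform DH H \<psi> \<psi>)"
    and c1: "c \<ge> 1"
    and b: "\<And>\<psi>. \<psi> \<in> Dc \<Longrightarrow> Re (hinner \<psi> (F (F \<psi>))) \<le> c\<^sup>2 * Re (hform DH H \<psi> \<psi>)"
    and c_cs: "\<And>n. 1 \<le> n \<Longrightarrow> enat n < m \<Longrightarrow> cs n \<ge> 1"
    and c_bd: "\<And>n \<phi>1 \<phi>2. 1 \<le> n \<Longrightarrow> enat n < m \<Longrightarrow> \<phi>1 \<in> Dc \<Longrightarrow> \<phi>2 \<in> Dc \<Longrightarrow>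
              cmod (hform DH H \<phi>1 ((F ^^ n) \<phi>2) - hform DH H ((F ^^ n) \<phi>1) \<phi>2)
                \<le> cs n * (Re (hform DH H \<phi>1 \<phi>1)
                     + Re (hform DH H ((F ^^ (n - 1)) \<phi>2) ((F ^^ (n - 1)) \<phi>2)))"
begin

lemma blF: "bounded_linear F" using rF by (simp add: rsa_def)

interpretation Rl: bounded_linear R by (rule blR)
interpretation Fl: bounded_linear F by (rule blF)

lemma Dc_sub: "hsubspace Dc" and Dc_Q: "Dc \<subseteq> range R"
  and dense0: "\<And>\<phi> e. \<phi> \<in> range R \<Longrightarrow> e > 0 \<Longrightarrow> \<exists>\<psi>\<in>Dc. form_norm DH H (\<phi> - \<psi>) < e"
  using core by (auto simp: form_core_def form_dom_R)

definition S where "S = {u. R u \<in> Dc}"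

lemma S_diff: "s \<in> S \<Longrightarrow> s' \<in> S \<Longrightarrow> s - s' \<in> S"
proof -
  assume "s \<in> S" "s' \<in> S"
  then have a: "R s \<in> Dc" "R s' \<in> Dc" by (auto simp: S_def)
  then have "hscaleC (-1) (R s') \<in> Dc" using Dc_sub by (simp add: hsubspace_def)
  then have "- R s' \<in> Dc" by (simp add: hscaleC_m1)
  then have "R s + - R s' \<in> Dc" using a Dc_sub unfolding hsubspace_def by blast
  then have "R s - R s' \<in> Dc" by simp
  then show "s - s' \<in> S" by (simp add: S_def Rl.diff)
qed

lemma S_dense: "closure S = UNIV"
proof -
  have "u \<in> closure S" for u
    unfolding closure_approachable
  proof (intro allI impI)
    fix e :: real assume e: "e > 0"
    obtain \<psi> where \<psi>: "\<psi> \<in> Dc" "form_norm DH H (R u - \<psi>) < e"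
      using dense0[of "R u" e] e by auto
    then obtain s where s: "\<psi> = R s" using Dc_Q by auto
    have sS: "s \<in> S" using \<psi> s by (simp add: S_def)
    have "form_norm DH H (R u - \<psi>) = sqrt ((norm (R (u - s)))\<^sup>2 + (norm (u - s))\<^sup>2)"
      by (simp add: form_norm_def s Rl.diff[symmetric] hform_R hinner_self)
    moreover have "norm (u - s) \<le> sqrt ((norm (R (u - s)))\<^sup>2 + (norm (u - s))\<^sup>2)"
      by (rule real_le_rsqrt) simp
    ultimately have "norm (u - s) < e" using \<psi> by linarith
    then have "dist s u < e" by (simp add: dist_norm norm_minus_commute)
    then show "\<exists>y\<in>S. dist y u < e" using sS by blast
  qed
  then show ?thesis by auto
qed

definition G0 where "G0 s = Hhalf DH H (F (R s))"

lemma RG0: "s \<in> S \<Longrightarrow> R (G0 s) = F (R s)"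
proof -
  assume "s \<in> S"
  then have "F (R s) \<in> range R" using a1 by (auto simp: S_def form_dom_R)
  then obtain w where "F (R s) = R w" by auto
  then show ?thesis by (simp add: G0_def Hhalf_R)
qed

lemma G0_norm: "s \<in> S \<Longrightarrow> norm (G0 s) \<le> sqrt ce * norm s"
proof -
  assume sS: "s \<in> S"
  have "Re (hform DH H (F (R s)) (F (R s))) \<le> ce * Re (hform DH H (R s) (R s))"
    using a2 sS by (simp add: S_def)
  then have "(norm (G0 s))\<^sup>2 \<le> ce * (norm s)\<^sup>2"
    by (simp add: RG0[OF sS, symmetric] hform_R hinner_self)
  then have "sqrt ((norm (G0 s))\<^sup>2) \<le> sqrt (ce * (norm s)\<^sup>2)" by (rule real_sqrt_le_mono)
  then show ?thesis using ce by (simp add: real_sqrt_mult)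
qed

lemma G0_diff: "s \<in> S \<Longrightarrow> s' \<in> S \<Longrightarrow> G0 (s - s') = G0 s - G0 s'"
proof -
  assume s: "s \<in> S" and s': "s' \<in> S"
  have "R (G0 (s - s')) = F (R (s - s'))" by (rule RG0[OF S_diff[OF s s']])
  also have "\<dots> = F (R s) - F (R s')" by (simp only: Rl.diff Fl.diff)
  also have "\<dots> = R (G0 s) - R (G0 s')" by (simp only: RG0[OF s] RG0[OF s'])
  also have "\<dots> = R (G0 s - G0 s')" by (simp only: Rl.diff)
  finally show ?thesis by (rule R_inj)
qed

lemma G0_uc: "uniformly_continuous_on S G0"
  unfolding uniformly_continuous_on_def
proof (intro allI impI)
  fix e :: real assume e: "e > 0"
  define L where "L = sqrt ce"
  have L0: "L \<ge> 0" using ce by (simp add: L_def)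
  show "\<exists>d>0. \<forall>x\<in>S. \<forall>x'\<in>S. dist x' x < d \<longrightarrow> dist (G0 x') (G0 x) < e"
  proof (intro exI conjI ballI impI)
    show "e / (L + 1) > 0" using e L0 by simp
    fix x x' assume x: "x \<in> S" and x': "x' \<in> S" and d: "dist x' x < e / (L + 1)"
    have "dist (G0 x') (G0 x) = norm (G0 (x' - x))" by (simp add: dist_norm G0_diff x x')
    also have "\<dots> \<le> L * norm (x' - x)" using G0_norm[OF S_diff[OF x' x]] by (simp add: L_def)
    also have "\<dots> \<le> L * (e / (L + 1))"
      by (rule mult_left_mono[OF _ L0]) (use d in \<open>simp add: dist_norm\<close>)
    also have "\<dots> < e" using e L0 by (simp add: field_simps)
    finally show "dist (G0 x') (G0 x) < e" .
  qed
qed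

definition G where "G = (SOME g. continuous_on UNIV g \<and> (\<forall>s\<in>S. g s = G0 s))"

lemma G_ex: "continuous_on UNIV G \<and> (\<forall>s\<in>S. G s = G0 s)"
proof -
  obtain g where "uniformly_continuous_on (closure S) g" "\<And>x. x \<in> S \<Longrightarrow> G0 x = g x"
    using uniformly_continuous_on_extension_on_closure[OF G0_uc] by metis
  then have "continuous_on UNIV g \<and> (\<forall>s\<in>S. g s = G0 s)"
    using S_dense uniformly_continuous_imp_continuous by fastforce
  then show ?thesis unfolding G_def by (rule someI[where P="\<lambda>g. continuous_on UNIV g \<and> (\<forall>s\<in>S. g s = G0 s)"])
qed

lemma G_cont: "continuous_on UNIV G" using G_ex by simp

lemma RG: "R (G u) = F (R u)"
proof (rule dense_eq[OF S_dense, where f="\<lambda>u. R (G u)" and g="\<lambda>u. F (R u)"])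
  show "continuous_on UNIV (\<lambda>u. R (G u))" by (intro Rl.continuous_on G_cont)
  show "continuous_on UNIV (\<lambda>u. F (R u))" by (intro Fl.continuous_on Rl.continuous_on continuous_on_id)
  show "\<And>s. s \<in> S \<Longrightarrow> R (G s) = F (R s)" using G_ex RG0 by simp
qed

lemma G_norm: "norm (G u) \<le> sqrt ce * norm u"
proof (rule dense_le[OF S_dense, where f="\<lambda>u. norm (G u)" and g="\<lambda>u. sqrt ce * norm u"])
  show "continuous_on UNIV (\<lambda>u. norm (G u))" by (intro continuous_intros G_cont)
  show "continuous_on UNIV (\<lambda>u. sqrt ce * norm u)" by (intro continuous_intros)
  show "\<And>s. s \<in> S \<Longrightarrow> norm (G s) \<le> sqrt ce * norm s" using G_ex G0_norm by simp
qed

lemma blG: "bounded_linear G"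
proof (rule bounded_linear_intro[where K="sqrt ce"])
  show "G (x + y) = G x + G y" for x y
    by (rule R_inj) (simp only: RG Rl.add Fl.add)
  show "G (r *\<^sub>R x) = r *\<^sub>R G x" for r x
    by (rule R_inj) (simp only: RG Rl.scaleR Fl.scaleR)
  show "norm (G x) \<le> norm x * sqrt ce" for x using G_norm[of x] by (simp add: mult.commute)
qed

lemma G_cJ: "G (cJ x) = cJ (G x)"
proof -
  have cR: "R (cJ a) = cJ (R a)" for a using rR by (simp add: rsa_def)
  have cF: "F (cJ a) = cJ (F a)" for a using rF by (simp add: rsa_def)
  have "R (G (cJ x)) = R (cJ (G x))" by (simp only: RG cR cF)
  then show ?thesis by (rule R_inj)
qed

lemma blGn: "bounded_linear (G ^^ n)"
proof (induction n)
  case 0 then show ?case by (simp add: id_def bounded_linear_ident)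
next
  case (Suc n)
  show ?case using bounded_linear_compose[OF blG Suc.IH] by (simp add: o_def)
qed

lemma blFn: "bounded_linear (F ^^ n)"
  using rsa_funpow[OF rF] by (simp add: rsa_def)

lemma FnR: "(F ^^ n) (R u) = R ((G ^^ n) u)"
  by (induction n) (simp_all add: RG)

lemma Gn_scaleR: "(G ^^ n) (r *\<^sub>R u) = r *\<^sub>R (G ^^ n) u"
  by (rule linear_scale[OF bounded_linear.linear[OF blGn]])

lemma FR_norm: "norm (F (R u)) \<le> c * norm u"
proof (rule dense_le[OF S_dense, where f="\<lambda>u. norm (F (R u))" and g="\<lambda>u. c * norm u"])
  have cFR: "continuous_on UNIV (\<lambda>u. F (R u))"
    by (rule Fl.continuous_on[OF Rl.continuous_on[OF continuous_on_id]])
  show "continuous_on UNIV (\<lambda>u. norm (F (R u)))"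
    by (rule continuous_on_norm[OF cFR])
  show "continuous_on UNIV (\<lambda>u. c * norm u)"
    by (rule continuous_on_mult_left[OF continuous_on_norm[OF continuous_on_id]])
  fix s assume sS: "s \<in> S"
  have syF: "inner (F a) b = inner a (F b)" for a b using rF by (simp add: rsa_def)
  have "Re (hinner (R s) (F (F (R s)))) \<le> c\<^sup>2 * Re (hform DH H (R s) (R s))"
    using b sS by (simp add: S_def)
  moreover have "Re (hinner (R s) (F (F (R s)))) = (norm (F (R s)))\<^sup>2"
  proof -
    have "Re (hinner (R s) (F (F (R s)))) = inner (R s) (F (F (R s)))" by simp
    also have "\<dots> = inner (F (R s)) (F (R s))" by (rule syF[symmetric])
    also have "\<dots> = (norm (F (R s)))\<^sup>2" by (simp add: power2_norm_eq_inner)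
    finally show ?thesis .
  qed
  moreover have "Re (hform DH H (R s) (R s)) = (norm s)\<^sup>2"
    by (simp add: hform_R hinner_self)
  ultimately have "(norm (F (R s)))\<^sup>2 \<le> (c * norm s)\<^sup>2"
    by (simp add: power_mult_distrib)
  then show "norm (F (R s)) \<le> c * norm s"
  proof (rule power2_le_imp_le)
    show "0 \<le> c * norm s" using c1 by simp
  qed
qed

lemma RF_norm: "norm (R (F w)) \<le> c * norm w"
proof -
  have syR: "inner (R a) b = inner a (R b)" for a b using rR by (simp add: rsa_def)
  have syF: "inner (F a) b = inner a (F b)" for a b using rF by (simp add: rsa_def)
  have "(norm (R (F w)))\<^sup>2 = inner (R (F w)) (R (F w))" by (simp add: power2_norm_eq_inner)
  also have "\<dots> = inner w (F (R (R (F w))))" by (simp add: syR syF)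
  also have "\<dots> \<le> norm w * norm (F (R (R (F w))))" by (rule norm_cauchy_schwarz)
  also have "\<dots> \<le> norm w * (c * norm (R (F w)))" by (intro mult_left_mono FR_norm) simp
  finally have *: "norm (R (F w)) * norm (R (F w)) \<le> norm (R (F w)) * (c * norm w)"
    by (simp add: power2_eq_square algebra_simps)
  show ?thesis
  proof (cases "norm (R (F w)) = 0")
    case True then show ?thesis using c1 by simp
  next
    case False then have "norm (R (F w)) > 0" by simp
    with * show ?thesis using mult_le_cancel_left_pos by blast
  qed
qed

lemma comm_ext:
  assumes n: "1 \<le> n" "enat n < m"
  shows "cmod (hinner u1 ((G ^^ n) u2) - hinner ((G ^^ n) u1) u2)
           \<le> cs n * ((norm u1)\<^sup>2 + (norm ((G ^^ (n - 1)) u2))\<^sup>2)"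
proof -
  let ?f = "\<lambda>p::'a \<times> 'a. cmod (hinner (fst p) ((G ^^ n) (snd p)) - hinner ((G ^^ n) (fst p)) (snd p))"
  let ?g = "\<lambda>p::'a \<times> 'a. cs n * ((norm (fst p))\<^sup>2 + (norm ((G ^^ (n - 1)) (snd p)))\<^sup>2)"
  have "?f (u1, u2) \<le> ?g (u1, u2)"
  proof (rule dense_le[where S="S \<times> S" and f="?f" and g="?g"])
    show "closure (S \<times> S) = UNIV" by (simp add: closure_Times S_dense)
    show "continuous_on UNIV ?f"
      by (intro continuous_intros bounded_linear.continuous_on[OF blGn] continuous_on_fst continuous_on_snd continuous_on_id)
    show "continuous_on UNIV ?g"
      by (intro continuous_intros bounded_linear.continuous_on[OF blGn] continuous_on_fst continuous_on_snd continuous_on_id)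
    fix p assume "p \<in> S \<times> S"
    then have p1: "R (fst p) \<in> Dc" and p2: "R (snd p) \<in> Dc" by (auto simp: S_def)
    show "?f p \<le> ?g p"
      using c_bd[OF n p1 p2] by (simp add: FnR hform_R hinner_self)
  qed
  then show ?thesis by simp
qed

end




lemma real_key:
  fixes a P b s :: real
  assumes a0: "a \<ge> 0" and P0: "P \<ge> 0" and b0: "b > 0" and s0: "s \<ge> 0"
    and h: "\<And>t. t > 0 \<Longrightarrow> a\<^sup>2 \<le> a * P + s * (t\<^sup>2 * a\<^sup>2 + b\<^sup>2 / t\<^sup>2)"
  shows "a \<le> P + 2 * s * b"
proof (cases "a = 0")
  case True then show ?thesis using P0 b0 s0 by simp
next
  case False
  then have ap: "a > 0" using a0 by simp
  define t where "t = sqrt (b / a)"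
  have tp: "t > 0" using ap b0 by (simp add: t_def)
  have t2: "t\<^sup>2 = b / a" using ap b0 by (simp add: t_def)
  have e1: "t\<^sup>2 * a\<^sup>2 = a * b" unfolding t2 using ap by (simp add: power2_eq_square field_simps)
  have e2: "b\<^sup>2 / t\<^sup>2 = a * b" unfolding t2 using ap b0 by (simp add: power2_eq_square field_simps)
  have h': "a\<^sup>2 \<le> a * P + s * (a * b + a * b)" using h[OF tp] unfolding e1 e2 .
  have "a * a \<le> a * (P + 2 * s * b)"
    using h' by (simp add: power2_eq_square algebra_simps)
  then show ?thesis using ap mult_le_cancel_left_pos by blast
qed

lemma enat_aux: "enat (Suc k) < m + 1 \<Longrightarrow> enat k < m"
  by (cases m) (auto simp: one_enat_def)

lemma enat_le_aux: "enat n < m \<Longrightarrow> l \<le> n \<Longrightarrow> enat l < m"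
  by (meson enat_ord_simps(1) le_less_trans)

context Mctx
begin

definition Gb where "Gb n = 4^n * c^n * (\<Prod>l=1..n. cs l)"
definition W where "W n = (if n = 0 then 1 else c * Gb (n - 1))"

lemma Gb_ge1: "enat n < m \<Longrightarrow> Gb n \<ge> 1"
proof -
  assume n: "enat n < m"
  have p: "(\<Prod>l=1..n. cs l) \<ge> 1"
    by (rule prod_ge_1) (use n in \<open>auto intro: c_cs enat_le_aux\<close>)
  have "(1::real) \<le> 4^n" by simp
  moreover have "1 \<le> c^n" using c1 by simp
  ultimately have "1 \<le> 4^n * c^n" by (metis mult_mono' one_le_power zero_le_one mult_1_left order_trans c1 zero_le_numeral)
  then show ?thesis using p unfolding Gb_def by (metis mult_mono' mult_1_left order_trans zero_le_one)
qed

lemma Gb_Suc: "Gb (Suc k) = 4 * c * cs (Suc k) * Gb k"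
proof -
  have "(\<Prod>l=1..Suc k. cs l) = cs (Suc k) * (\<Prod>l=1..k. cs l)"
    by (simp add: atLeastAtMostSuc_conv)
  then show ?thesis by (simp add: Gb_def algebra_simps)
qed

lemma const_step:
  assumes "enat (Suc k) < m"
  shows "c * W k + 2 * cs (Suc k) * Gb k \<le> Gb (Suc k)"
proof -
  have k: "enat k < m" using enat_le_aux[OF assms, of k] by simp
  define q where "q = cs (Suc k)"
  define g where "g = Gb k"
  have q1: "q \<ge> 1" using c_cs[OF _ assms] by (simp add: q_def)
  have g1: "g \<ge> 1" unfolding g_def by (rule Gb_ge1[OF k])
  have cq: "c \<le> c * q" using mult_left_mono[OF q1, of c] c1 by simp
  have qc: "q \<le> c * q" using mult_right_mono[OF c1, of q] q1 by simp
  have cqg: "c * q \<le> c * q * g" using mult_left_mono[OF g1, of "c * q"] c1 q1 by simp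
  have cqg0: "c * q * g \<ge> 0" using c1 q1 g1 by simp
  have Wk: "c * W k \<le> 2 * (c * q * g)"
  proof (cases k)
    case 0
    then have "c * W k = c" "g = 1" by (simp_all add: W_def g_def Gb_def)
    then show ?thesis using cq c1 q1 by simp
  next
    case (Suc j)
    have j: "enat (Suc j) < m" using k Suc by simp
    define q' where "q' = cs (Suc j)"
    have q'1: "q' \<ge> 1" using c_cs[OF _ j] by (simp add: q'_def)
    have gj: "Gb j \<ge> 1" using Gb_ge1 enat_le_aux[OF j, of j] by simp
    have gk: "g = 4 * c * q' * Gb j" using Gb_Suc[of j] by (simp add: g_def q'_def Suc)
    have Wv: "c * W k = c * c * Gb j" by (simp add: W_def Suc)
    have cq': "c \<le> c * q'" using mult_left_mono[OF q'1, of c] c1 by simp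
    have "c * c \<le> (c * q) * (c * q')"
      by (rule mult_mono[OF cq cq']) (use c1 q1 in simp_all)
    then have "c * c * Gb j \<le> (c * q) * (c * q') * Gb j"
      by (rule mult_right_mono) (use gj in simp)
    also have "\<dots> = c * q * g / 4" by (simp add: gk)
    finally show ?thesis using Wv cqg0 by linarith
  qed
  moreover have "2 * q * g \<le> 2 * (c * q) * g" using mult_right_mono[OF qc, of g] g1 by simp
  ultimately have "c * W k + 2 * q * g \<le> 4 * c * q * g" by simp
  then show ?thesis by (simp add: Gb_Suc q_def g_def)
qed

lemma Fstep: "norm ((F ^^ Suc j) ((R ^^ Suc j) x)) \<le> c * norm ((G ^^ j) ((R ^^ j) x))"
proof -
  have "(F ^^ Suc j) ((R ^^ Suc j) x) = F ((F ^^ j) (R ((R ^^ j) x)))"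
    by (simp add: funpow_swap1)
  also have "\<dots> = F (R ((G ^^ j) ((R ^^ j) x)))" by (simp add: FnR)
  finally show ?thesis using FR_norm by simp
qed

lemma mainB: "enat n < m \<Longrightarrow> norm ((G ^^ n) ((R ^^ n) x)) \<le> Gb n * norm x"
proof (induction n arbitrary: x rule: less_induct)
  case (less n)
  show ?case
  proof (cases n)
    case 0 then show ?thesis by (simp add: Gb_def)
  next
    case (Suc k)
    have nm: "enat n < m" by fact
    have km: "enat k < m" using enat_le_aux[OF nm, of k] Suc by simp
    have IHk: "norm ((G ^^ k) ((R ^^ k) y)) \<le> Gb k * norm y" for y
      using less.IH[of k y] Suc km by simp
    have Gk1: "Gb k \<ge> 1" by (rule Gb_ge1[OF km])
    have Wk: "norm ((F ^^ k) ((R ^^ k) y)) \<le> W k * norm y" for y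
    proof (cases k)
      case 0 then show ?thesis by (simp add: W_def)
    next
      case (Suc j)
      have jm: "enat j < m" using enat_le_aux[OF km, of j] Suc by simp
      have "norm ((F ^^ k) ((R ^^ k) y)) \<le> c * norm ((G ^^ j) ((R ^^ j) y))"
        using Fstep Suc by simp
      also have "\<dots> \<le> c * (Gb j * norm y)"
        using less.IH[of j y] Suc \<open>n = Suc k\<close> jm c1 by (simp add: mult_left_mono)
      finally show ?thesis by (simp add: W_def Suc)
    qed
    have W0: "W k \<ge> 0"
    proof (cases k)
      case (Suc j)
      have "Gb j \<ge> 1" using Gb_ge1 enat_le_aux[OF km, of j] Suc by simp
      then show ?thesis using c1 Suc by (simp add: W_def)
    qed (simp add: W_def)
    define u2 where "u2 = (R ^^ n) x"
    define v where "v = (G ^^ n) u2"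
    define a where "a = norm v"
    have cs0: "cs n \<ge> 1" using c_cs[OF _ nm] Suc by simp
    have i: "cmod (hinner ((G ^^ n) v) u2) \<le> a * (c * W k * norm x)"
    proof -
      define w where "w = (R ^^ k) x"
      have u2w: "u2 = R w" by (simp add: u2_def w_def Suc)
      have rFn: "rsa (F ^^ n)" by (rule rsa_funpow[OF rF])
      have "hinner ((G ^^ n) v) u2 = hinner (R ((G ^^ n) v)) w" by (simp add: u2w hinner_R)
      also have "\<dots> = hinner ((F ^^ n) (R v)) w" by (simp add: FnR)
      also have "\<dots> = hinner (R v) ((F ^^ n) w)" by (rule rsa_hinner[OF rFn])
      also have "\<dots> = hinner v (R ((F ^^ n) w))" by (rule hinner_R)
      finally have eq: "hinner ((G ^^ n) v) u2 = hinner v (R (F ((F ^^ k) w)))"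
        by (simp add: Suc)
      have "norm (R (F ((F ^^ k) w))) \<le> c * norm ((F ^^ k) w)" by (rule RF_norm)
      also have "\<dots> \<le> c * (W k * norm x)" using Wk[of x] c1 by (simp add: w_def mult_left_mono)
      finally have nb: "norm (R (F ((F ^^ k) w))) \<le> c * W k * norm x" by simp
      have "cmod (hinner ((G ^^ n) v) u2) \<le> norm v * norm (R (F ((F ^^ k) w)))"
        unfolding eq by (rule cmod_hinner_le)
      also have "\<dots> \<le> a * (c * W k * norm x)" unfolding a_def by (rule mult_left_mono[OF nb]) simp
      finally show ?thesis .
    qed
    have ii: "norm ((G ^^ k) u2) \<le> Gb k * norm x"
    proof -
      have "u2 = (R ^^ k) (R x)" by (simp add: u2_def Suc funpow_swap1)
      then have "norm ((G ^^ k) u2) \<le> Gb k * norm (R x)" using IHk by simp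
      also have "\<dots> \<le> Gb k * norm x" using Gk1 norm_R by (simp add: mult_left_mono)
      finally show ?thesis .
    qed
    have iii: "a\<^sup>2 \<le> a * (c * W k * norm x) + cs n * (t\<^sup>2 * a\<^sup>2 + (Gb k * norm x)\<^sup>2 / t\<^sup>2)"
      if tp: "t > 0" for t
    proof -
      have n1: "1 \<le> n" using Suc by simp
      have ce': "cmod (hinner (t *\<^sub>R v) ((G ^^ n) ((1/t) *\<^sub>R u2)) - hinner ((G ^^ n) (t *\<^sub>R v)) ((1/t) *\<^sub>R u2))
           \<le> cs n * ((norm (t *\<^sub>R v))\<^sup>2 + (norm ((G ^^ (n - 1)) ((1/t) *\<^sub>R u2)))\<^sup>2)"
        by (rule comm_ext[OF n1 nm])
      have lhs: "hinner (t *\<^sub>R v) ((G ^^ n) ((1/t) *\<^sub>R u2)) - hinner ((G ^^ n) (t *\<^sub>R v)) ((1/t) *\<^sub>R u2)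
             = complex_of_real (a\<^sup>2) - hinner ((G ^^ n) v) u2"
      proof -
        have "hinner (t *\<^sub>R v) ((G ^^ n) ((1/t) *\<^sub>R u2)) = complex_of_real (t * (1/t)) * hinner v v"
          by (simp add: Gn_scaleR hinner_scaleR_left hinner_scaleR_right v_def)
        also have "\<dots> = complex_of_real (a\<^sup>2)" using tp by (simp add: hinner_self a_def)
        finally have 1: "hinner (t *\<^sub>R v) ((G ^^ n) ((1/t) *\<^sub>R u2)) = complex_of_real (a\<^sup>2)" .
        have "hinner ((G ^^ n) (t *\<^sub>R v)) ((1/t) *\<^sub>R u2) = complex_of_real (t * (1/t)) * hinner ((G ^^ n) v) u2"
          by (simp add: Gn_scaleR hinner_scaleR_left hinner_scaleR_right)
        also have "\<dots> = hinner ((G ^^ n) v) u2" using tp by simp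
        finally show ?thesis using 1 by simp
      qed
      have rhs: "cs n * ((norm (t *\<^sub>R v))\<^sup>2 + (norm ((G ^^ (n - 1)) ((1/t) *\<^sub>R u2)))\<^sup>2)
           \<le> cs n * (t\<^sup>2 * a\<^sup>2 + (Gb k * norm x)\<^sup>2 / t\<^sup>2)"
      proof -
        have "(norm ((G ^^ (n - 1)) ((1/t) *\<^sub>R u2)))\<^sup>2 = (norm ((G ^^ k) u2))\<^sup>2 / t\<^sup>2"
          using tp by (simp add: Gn_scaleR Suc power_divide)
        also have "\<dots> \<le> (Gb k * norm x)\<^sup>2 / t\<^sup>2"
          by (rule divide_right_mono[OF power_mono[OF ii]]) simp_all
        finally have "(norm ((G ^^ (n - 1)) ((1/t) *\<^sub>R u2)))\<^sup>2 \<le> (Gb k * norm x)\<^sup>2 / t\<^sup>2" .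
        moreover have "(norm (t *\<^sub>R v))\<^sup>2 = t\<^sup>2 * a\<^sup>2" using tp by (simp add: a_def power_mult_distrib)
        ultimately show ?thesis using cs0 by (simp add: mult_left_mono)
      qed
      have "a\<^sup>2 - cmod (hinner ((G ^^ n) v) u2) \<le> cmod (complex_of_real (a\<^sup>2) - hinner ((G ^^ n) v) u2)"
      proof -
        have "cmod (complex_of_real (a\<^sup>2)) = a\<^sup>2" by (simp only: norm_of_real) (simp add: a_def)
        then show ?thesis
          using norm_triangle_ineq2[of "complex_of_real (a\<^sup>2)" "hinner ((G ^^ n) v) u2"] by linarith
      qed
      then show ?thesis using ce'[unfolded lhs] rhs i by linarith
    qed
    show ?thesis
    proof (cases "x = 0")
      case True
      have R0: "(R ^^ j) 0 = 0" for j by (induction j) (simp_all add: linear_0[OF bounded_linear.linear[OF blR]])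
      have G0: "(G ^^ n) 0 = 0" by (rule linear_0[OF bounded_linear.linear[OF blGn]])
      show ?thesis using True by (simp add: R0 G0)
    next
      case False
      have bpos: "Gb k * norm x > 0" using Gk1 False by simp
      have "a \<le> c * W k * norm x + 2 * cs n * (Gb k * norm x)"
        by (rule real_key[OF _ _ bpos _ iii]) (use c1 W0 cs0 in \<open>simp_all add: a_def\<close>)
      also have "\<dots> = (c * W k + 2 * cs (Suc k) * Gb k) * norm x" by (simp add: Suc algebra_simps)
      also have "\<dots> \<le> Gb n * norm x"
        using const_step[of k] nm Suc by (simp add: mult_right_mono)
      finally show ?thesis by (simp add: a_def v_def u2_def)
    qed
  qed
qed

end




context Mctx
begin

lemma final_bound:
  assumes n1: "1 \<le> n" and nm: "enat n < m + 1"
  shows "norm ((F ^^ n) ((R ^^ n) x)) \<le> 4 ^ (n - 1) * c ^ n * (\<Prod>l = 1..n - 1. cs l) * norm x"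
proof -
  obtain k where nk: "n = Suc k" using n1 by (cases n) auto
  have km: "enat k < m" using nm nk enat_aux by simp
  have "norm ((F ^^ n) ((R ^^ n) x)) \<le> c * norm ((G ^^ k) ((R ^^ k) x))"
    using Fstep nk by simp
  also have "\<dots> \<le> c * (Gb k * norm x)"
    using mainB[OF km, of x] c1 by (simp add: mult_left_mono)
  also have "\<dots> = 4 ^ (n - 1) * c ^ n * (\<Prod>l = 1..n - 1. cs l) * norm x"
    by (simp add: Gb_def nk algebra_simps)
  finally show ?thesis .
qed

end

theorem theorem2p1:
  fixes DH :: "'a::complex_hilbert set" and H :: "'a \<Rightarrow> 'a"
    and F :: "real \<Rightarrow> 'a \<Rightarrow> 'a"
    and m :: enat and \<D> :: "'a set"
    and c :: real and cs :: "nat \<Rightarrow> real"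
  assumes H_sa: "self_adjoint_op DH H" and H_ge1: "op_ge DH H 1"
    and F_sa: "\<And>\<epsilon>. \<epsilon> > 0 \<Longrightarrow> bounded_self_adjoint (F \<epsilon>)"
    and F_ge0: "\<And>\<epsilon>. \<epsilon> > 0 \<Longrightarrow> op_ge UNIV (F \<epsilon>) 0"
    and m_ge1: "m \<ge> 1"
    and core: "form_core DH H \<D>"
    and a: "\<And>\<epsilon>. \<epsilon> > 0 \<Longrightarrow> F \<epsilon> ` \<D> \<subseteq> form_dom DH H \<and>
              (\<exists>c\<epsilon>>0. \<forall>\<psi>\<in>\<D>. Re (hform DH H (F \<epsilon> \<psi>) (F \<epsilon> \<psi>)) \<le> c\<epsilon> * Re (hform DH H \<psi> \<psi>))"
    and b_c: "c \<ge> 1"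
    and b: "\<And>\<epsilon> \<psi>. \<epsilon> > 0 \<Longrightarrow> \<psi> \<in> \<D> \<Longrightarrow>
              Re (hinner \<psi> (F \<epsilon> (F \<epsilon> \<psi>))) \<le> c\<^sup>2 * Re (hform DH H \<psi> \<psi>)"
    and c_cs: "\<And>n. 1 \<le> n \<Longrightarrow> enat n < m \<Longrightarrow> cs n \<ge> 1"
    and c_bd: "\<And>n \<epsilon> \<phi>1 \<phi>2. 1 \<le> n \<Longrightarrow> enat n < m \<Longrightarrow> \<epsilon> > 0 \<Longrightarrow> \<phi>1 \<in> \<D> \<Longrightarrow> \<phi>2 \<in> \<D> \<Longrightarrow>
              cmod (hform DH H \<phi>1 ((F \<epsilon> ^^ n) \<phi>2) - hform DH H ((F \<epsilon> ^^ n) \<phi>1) \<phi>2)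
                \<le> cs n * (Re (hform DH H \<phi>1 \<phi>1)
                     + Re (hform DH H ((F \<epsilon> ^^ (n - 1)) \<phi>2) ((F \<epsilon> ^^ (n - 1)) \<phi>2)))"
  shows "\<forall>n \<epsilon>. 1 \<le> n \<longrightarrow> enat n < m + 1 \<longrightarrow> \<epsilon> > 0 \<longrightarrow>
           onorm (\<lambda>x. (F \<epsilon> ^^ n) (Hmpow DH H n x))
             \<le> 4 ^ (n - 1) * c ^ n * (\<Prod>l = 1..n - 1. cs l)"
proof (intro allI impI)
  fix n :: nat and \<epsilon> :: real
  assume n1: "1 \<le> n" and nm: "enat n < m + 1" and e: "\<epsilon> > 0"
  obtain ce where ce: "ce > 0"
    and ce2: "\<forall>\<psi>\<in>\<D>. Re (hform DH H (F \<epsilon> \<psi>) (F \<epsilon> \<psi>)) \<le> ce * Re (hform DH H \<psi> \<psi>)"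
    using a[OF e] by blast
  interpret M: Mctx DH H "F \<epsilon>" \<D> ce c m cs
  proof unfold_locales
    show "self_adjoint_op DH H" by (rule H_sa)
    show "op_ge DH H 1" by (rule H_ge1)
    show "rsa (F \<epsilon>)" using F_sa[OF e] by (simp add: bsa_iff_rsa)
    show "form_core DH H \<D>" by (rule core)
    show "F \<epsilon> ` \<D> \<subseteq> form_dom DH H" using a[OF e] by blast
    show "ce > 0" by (rule ce)
    show "\<And>\<psi>. \<psi> \<in> \<D> \<Longrightarrow> Re (hform DH H (F \<epsilon> \<psi>) (F \<epsilon> \<psi>)) \<le> ce * Re (hform DH H \<psi> \<psi>)"
      using ce2 by blast
    show "c \<ge> 1" by (rule b_c)
    show "\<And>\<psi>. \<psi> \<in> \<D> \<Longrightarrow> Re (hinner \<psi> (F \<epsilon> (F \<epsilon> \<psi>))) \<le> c\<^sup>2 * Re (hform DH H \<psi> \<psi>)"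
      using b[OF e] by blast
    show "\<And>n. 1 \<le> n \<Longrightarrow> enat n < m \<Longrightarrow> cs n \<ge> 1" by (rule c_cs)
    show "\<And>n \<phi>1 \<phi>2. 1 \<le> n \<Longrightarrow> enat n < m \<Longrightarrow> \<phi>1 \<in> \<D> \<Longrightarrow> \<phi>2 \<in> \<D> \<Longrightarrow>
              cmod (hform DH H \<phi>1 ((F \<epsilon> ^^ n) \<phi>2) - hform DH H ((F \<epsilon> ^^ n) \<phi>1) \<phi>2)
                \<le> cs n * (Re (hform DH H \<phi>1 \<phi>1)
                     + Re (hform DH H ((F \<epsilon> ^^ (n - 1)) \<phi>2) ((F \<epsilon> ^^ (n - 1)) \<phi>2)))"
      using c_bd[OF _ _ e] by blast
  qed
  obtain k where nk: "n = Suc k" using n1 by (cases n) auto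
  have km: "enat k < m" using nm nk enat_aux by simp
  have p0: "(\<Prod>l = 1..n - 1. cs l) \<ge> 0"
  proof (rule prod_nonneg)
    fix l assume "l \<in> {1..n - 1}"
    then have "1 \<le> l" "enat l < m" using enat_le_aux[OF km, of l] nk by auto
    then show "0 \<le> cs l" using c_cs by fastforce
  qed
  show "onorm (\<lambda>x. (F \<epsilon> ^^ n) (Hmpow DH H n x)) \<le> 4 ^ (n - 1) * c ^ n * (\<Prod>l = 1..n - 1. cs l)"
  proof (rule onorm_bound)
    show "0 \<le> 4 ^ (n - 1) * c ^ n * (\<Prod>l = 1..n - 1. cs l)" using b_c p0 by simp
    fix x
    show "norm ((F \<epsilon> ^^ n) (Hmpow DH H n x)) \<le> 4 ^ (n - 1) * c ^ n * (\<Prod>l = 1..n - 1. cs l) * norm x"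
      using M.final_bound[OF n1 nm, of x] by (simp add: M.Hmpow_R)
  qed
qed


end
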